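(* Let $\mathfrak{M}$ be a non-quasianalytic weight matrix of R-moderate growth and $\mathfrak{M}'$ a one-parameter family of positive sequences such that $\liminf_{k\to\infty}(M'_k/k!)^{1/k}>0$ for all $M'\in\mathfrak{M}'$. Assume that there exists $\widehat M'\in\mathfrak{M}'$ such that for every $M'\in\mathfrak{M}'$ there is $n\in\mathbb{N}_{\ge1}$ with $M'\preceq(\widehat M')^{[n]}$. If there is $\widehat M\in\mathfrak{M}$ with $\widehat M'\prec_{SV}\widehat M$, then $\Lambda^{\{\mathfrak{M}'\}}\subseteq j^\infty\mathcal{E}^{\{\mathfrak{M}\}}(\mathbb{R})$.
   Context: A weight sequence is $M=(M_k)_{k\ge0}$ with $M_k=\mu_0\cdots\mu_k$, $1=\mu_0\le\mu_1\le\cdots$, $\mu_k\to\infty$; non-quasianalytic if $\sum1/\mu_k<\infty$. A weight matrix $\mathfrak{M}=\{M^{(\alpha)}:\alpha>0\}$: weight sequences with $M^{(\alpha)}\le M^{(\beta)}$ for $\alpha\le\beta$; non-quasianalytic if all members are; R-moderate growth: for each $M\in\mathfrak{M}$ there are $N\in\mathfrak{M}$, $C\ge1$ with $M_{j+k}\le C^{j+k}N_jN_k$. $M\preceq N$ iff $\sup_{k\ge1}(M_k/N_k)^{1/k}<\infty$. $N^{[n]}_j:=N_{nj}^{1/n}$. $M'\prec_{SV}M$ means $\exists s\in\mathbb{N}_{\ge1}$: $\sup_{j\ge1}\frac1j\sup_{0\le i<j}(M'_j/(s^jM_i))^{1/(j-i)}\sum_{k\ge j}1/\mu_k<\infty$.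 Spaces: $\Lambda^{\{M\}}=\{a\in\mathbb{C}^{\mathbb{N}}:\exists\sigma>0,\sup_k|a_k|/(\sigma^kM_k)<\infty\}$, $\Lambda^{\{\mathfrak{M}'\}}=\bigcup_{M'\in\mathfrak{M}'}\Lambda^{\{M'\}}$; $\mathcal{E}^{\{\mathfrak{M}\}}(\mathbb{R})$: all $f\in C^\infty(\mathbb{R})$ such that for each $n$ there are $\sigma>0$, $M\in\mathfrak{M}$ with $\sup_{x\in[-n,n],k}|f^{(k)}(x)|/(\sigma^kM_k)<\infty$; $j^\infty f=(f^{(k)}(0))_k$. *)

theory Defs
  imports "HOL-Analysis.Analysis"
begin

definition mu :: "(nat \<Rightarrow> real) \<Rightarrow> nat \<Rightarrow> real" where
  "mu M k = (if k = 0 then 1 else M k / M (k - 1))"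

definition weight_seq :: "(nat \<Rightarrow> real) \<Rightarrow> bool" where
  "weight_seq M \<longleftrightarrow> M 0 = 1 \<and> (\<forall>k. M k > 0) \<and> (\<forall>k. mu M k \<le> mu M (Suc k))
     \<and> filterlim (mu M) at_top sequentially"

definition nonquasianalytic :: "(nat \<Rightarrow> real) \<Rightarrow> bool" where
  "nonquasianalytic M \<longleftrightarrow> summable (\<lambda>k. 1 / mu M k)"

definition weight_matrix :: "(real \<Rightarrow> nat \<Rightarrow> real) \<Rightarrow> bool" where
  "weight_matrix Mat \<longleftrightarrow> (\<forall>\<alpha>>0. weight_seq (Mat \<alpha>))
     \<and> (\<forall>\<alpha> \<beta>. 0 < \<alpha> \<longrightarrow> \<alpha> \<le> \<beta> \<longrightarrow> (\<forall>k. Mat \<alpha> k \<le> Mat \<beta> k))"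

definition nonquasianalytic_matrix :: "(real \<Rightarrow> nat \<Rightarrow> real) \<Rightarrow> bool" where
  "nonquasianalytic_matrix Mat \<longleftrightarrow> (\<forall>\<alpha>>0. nonquasianalytic (Mat \<alpha>))"

definition R_moderate_growth :: "(real \<Rightarrow> nat \<Rightarrow> real) \<Rightarrow> bool" where
  "R_moderate_growth Mat \<longleftrightarrow> (\<forall>\<alpha>>0. \<exists>\<beta>>0. \<exists>C\<ge>1. \<forall>j k.
      Mat \<alpha> (j + k) \<le> C ^ (j + k) * Mat \<beta> j * Mat \<beta> k)"

definition seq_preceq :: "(nat \<Rightarrow> real) \<Rightarrow> (nat \<Rightarrow> real) \<Rightarrow> bool" where
  "seq_preceq M N \<longleftrightarrow> (\<exists>C. \<forall>k\<ge>1. (M k / N k) powr (1 / real k) \<le> C)"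

definition seq_pow_index :: "(nat \<Rightarrow> real) \<Rightarrow> nat \<Rightarrow> nat \<Rightarrow> real" where
  "seq_pow_index N n j = N (n * j) powr (1 / real n)"

definition SV_rel :: "(nat \<Rightarrow> real) \<Rightarrow> (nat \<Rightarrow> real) \<Rightarrow> bool" where
  "SV_rel M' M \<longleftrightarrow> (\<exists>s::nat. s \<ge> 1 \<and> (\<exists>C. \<forall>j\<ge>1.
      (1 / real j) * (MAX i\<in>{0..<j}. (M' j / (real s ^ j * M i)) powr (1 / real (j - i)))
        * (\<Sum>k. 1 / mu M (k + j)) \<le> C))"

definition Lambda_seq :: "(nat \<Rightarrow> real) \<Rightarrow> (nat \<Rightarrow> complex) set" where
  "Lambda_seq M = {a. \<exists>\<sigma>>0. \<exists>C. \<forall>k. cmod (a k) \<le> C * \<sigma> ^ k * M k}"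

definition Lambda_family :: "(real \<Rightarrow> nat \<Rightarrow> real) \<Rightarrow> (nat \<Rightarrow> complex) set" where
  "Lambda_family Mat' = (\<Union>\<alpha>\<in>{0<..}. Lambda_seq (Mat' \<alpha>))"

definition derivs_of :: "(real \<Rightarrow> complex) \<Rightarrow> (nat \<Rightarrow> real \<Rightarrow> complex) \<Rightarrow> bool" where
  "derivs_of f F \<longleftrightarrow> F 0 = f \<and> (\<forall>k x. (F k has_vector_derivative F (Suc k) x) (at x))"

definition E_roumieu :: "(real \<Rightarrow> nat \<Rightarrow> real) \<Rightarrow> (real \<Rightarrow> complex) set" where
  "E_roumieu Mat = {f. \<exists>F. derivs_of f F \<and> (\<forall>n::nat. \<exists>\<sigma>>0. \<exists>\<alpha>>0. \<exists>C. \<forall>x\<in>{- real n..real n}. \<forall>k.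
      cmod (F k x) \<le> C * \<sigma> ^ k * Mat \<alpha> k)}"

definition jet_image :: "(real \<Rightarrow> complex) set \<Rightarrow> (nat \<Rightarrow> complex) set" where
  "jet_image E = {a. \<exists>f\<in>E. \<exists>F. derivs_of f F \<and> (\<forall>k. F k 0 = a k)}"

end

theory Submission
  imports Defs
begin

definition shiftl :: "(nat \<Rightarrow> real) \<Rightarrow> nat \<Rightarrow> real" where
  "shiftl l i = l (Suc i)"

fun cdfn :: "nat \<Rightarrow> (nat \<Rightarrow> real) \<Rightarrow> real \<Rightarrow> real" where
  "cdfn 0 l y = (if 0 \<le> y then 1 else 0)"
| "cdfn (Suc n) l y = integral {y - l 0 / 2 .. y + l 0 / 2} (cdfn n (shiftl l)) / l 0"

lemma shift_integral:
  fixes g :: "real \<Rightarrow> real"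
  shows "integral {a..b} (\<lambda>z. g (z + d)) = integral {a+d..b+d} g"
  using integral_shift_real_ivl[of "a+d" d "b+d" g] by simp

lemma mono_integrable:
  fixes g :: "real \<Rightarrow> real"
  assumes "mono g" shows "g integrable_on {a..b}"
  by (rule integrable_on_mono_on) (use assms in \<open>auto simp: mono_on_def mono_def\<close>)

lemma mono_int_window:
  fixes g :: "real \<Rightarrow> real"
  assumes "mono g" "y1 \<le> y2"
  shows "integral {y1 - c .. y1 + c} g \<le> integral {y2 - c .. y2 + c} g"
proof -
  have "integral {y2 - c .. y2 + c} g = integral {y1 - c .. y1 + c} (\<lambda>z. g (z + (y2 - y1)))"
    by (subst shift_integral) (simp add: algebra_simps)
  moreover have "integral {y1 - c .. y1 + c} g \<le> integral {y1 - c .. y1 + c} (\<lambda>z. g (z + (y2 - y1)))"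
  proof (rule integral_le)
    show "g integrable_on {y1 - c..y1 + c}" by (rule mono_integrable[OF assms(1)])
    have "mono (\<lambda>z. g (z + (y2 - y1)))" using assms(1) by (auto simp: mono_def)
    then show "(\<lambda>z. g (z + (y2 - y1))) integrable_on {y1 - c..y1 + c}" by (rule mono_integrable)
    show "g x \<le> g (x + (y2 - y1))" for x using assms by (auto simp: mono_def)
  qed
  ultimately show ?thesis by simp
qed

lemma int_bounds01:
  fixes g :: "real \<Rightarrow> real"
  assumes "mono g" "\<And>z. 0 \<le> g z" "\<And>z. g z \<le> 1" "a \<le> b"
  shows "0 \<le> integral {a..b} g" "integral {a..b} g \<le> b - a"
proof -
  show "0 \<le> integral {a..b} g"
    by (rule integral_nonneg[OF mono_integrable[OF assms(1)]]) (use assms in auto)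
  have "integral {a..b} g \<le> integral {a..b} (\<lambda>_. 1::real)"
    by (rule integral_le[OF mono_integrable[OF assms(1)]]) (use assms in auto)
  then show "integral {a..b} g \<le> b - a" using assms(4) by simp
qed

lemma cdfn_basic:
  assumes "\<And>i. l i > 0"
  shows "mono (cdfn n l) \<and> (\<forall>y. 0 \<le> cdfn n l y \<and> cdfn n l y \<le> 1)"
  using assms
proof (induction n arbitrary: l)
  case 0
  then show ?case by (auto simp: mono_def)
next
  case (Suc n)
  have pos: "\<And>i. shiftl l i > 0" using Suc.prems by (simp add: shiftl_def)
  note IH = Suc.IH[where l="shiftl l", OF pos]
  have l0: "l 0 > 0" using Suc.prems by simp
  have m: "mono (cdfn (Suc n) l)"
  proof (rule monoI)
    fix x y :: real assume "x \<le> y"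
    then have "integral {x - l 0/2 .. x + l 0/2} (cdfn n (shiftl l)) \<le> integral {y - l 0/2 .. y + l 0/2} (cdfn n (shiftl l))"
      using mono_int_window[of "cdfn n (shiftl l)" x y "l 0/2"] IH by simp
    then show "cdfn (Suc n) l x \<le> cdfn (Suc n) l y" using l0 by (simp add: divide_right_mono)
  qed
  have "0 \<le> cdfn (Suc n) l y \<and> cdfn (Suc n) l y \<le> 1" for y
  proof -
    have a: "0 \<le> integral {y - l 0/2 .. y + l 0/2} (cdfn n (shiftl l))"
     and b: "integral {y - l 0/2 .. y + l 0/2} (cdfn n (shiftl l)) \<le> (y + l 0/2) - (y - l 0/2)"
      using int_bounds01[of "cdfn n (shiftl l)" "y - l 0/2" "y + l 0/2"] IH l0 by auto
    show ?thesis using a b l0 by (simp add: divide_le_eq)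
  qed
  then show ?case using m by blast
qed


lemma shiftl_pos: "(\<And>i. l i > 0) \<Longrightarrow> shiftl l i > 0"
  by (simp add: shiftl_def)

lemma cdfn_support:
  assumes "\<And>i. l i > 0"
  shows "(y < -(\<Sum>i<n. l i)/2 \<longrightarrow> cdfn n l y = 0) \<and> (y \<ge> (\<Sum>i<n. l i)/2 \<longrightarrow> cdfn n l y = 1)"
  using assms
proof (induction n arbitrary: l y)
  case 0
  then show ?case by auto
next
  case (Suc n)
  have pos: "\<And>i. shiftl l i > 0" using Suc.prems by (simp add: shiftl_def)
  note IH = Suc.IH[where l="shiftl l", OF pos]
  have l0: "l 0 > 0" using Suc.prems by simp
  have sum: "(\<Sum>i<Suc n. l i) = l 0 + (\<Sum>i<n. shiftl l i)"
    unfolding sum.lessThan_Suc_shift shiftl_def by simp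
  define S where "S = (\<Sum>i<n. shiftl l i)"
  have A: "cdfn (Suc n) l y = 0" if "y < -(l 0 + S)/2"
  proof -
    have "integral {y - l 0/2 .. y + l 0/2} (cdfn n (shiftl l)) = integral {y - l 0/2 .. y + l 0/2} (\<lambda>_. 0::real)"
    proof (rule integral_cong)
      fix z assume "z \<in> {y - l 0/2 .. y + l 0/2}"
      then have "z < -S/2" using that by auto
      then show "cdfn n (shiftl l) z = 0" using IH[of z] by (simp add: S_def)
    qed
    then show ?thesis by simp
  qed
  have B: "cdfn (Suc n) l y = 1" if "y \<ge> (l 0 + S)/2"
  proof -
    have "integral {y - l 0/2 .. y + l 0/2} (cdfn n (shiftl l)) = integral {y - l 0/2 .. y + l 0/2} (\<lambda>_. 1::real)"
    proof (rule integral_cong)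
      fix z assume "z \<in> {y - l 0/2 .. y + l 0/2}"
      then have "z \<ge> S/2" using that by auto
      then show "cdfn n (shiftl l) z = 1" using IH[of z] by (simp add: S_def)
    qed
    then show ?thesis using l0 by simp
  qed
  show ?case using A B sum by (simp add: S_def)
qed

lemma cdfn_sandwich:
  assumes "\<And>i. l i > 0"
  shows "cdfn n l (y - (\<Sum>i\<in>{n..<n+m}. l i)/2) \<le> cdfn (n+m) l y \<and>
         cdfn (n+m) l y \<le> cdfn n l (y + (\<Sum>i\<in>{n..<n+m}. l i)/2)"
  using assms
proof (induction n arbitrary: l y)
  case 0
  define E where "E = (\<Sum>i<m. l i)/2"
  have e: "(\<Sum>i\<in>{0..<0+m}. l i)/2 = E" by (simp add: E_def atLeast0LessThan)
  have sup: "(y < -E \<longrightarrow> cdfn m l y = 0) \<and> (y \<ge> E \<longrightarrow> cdfn m l y = 1)"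
    using cdfn_support[where l=l and y=y and n=m, OF 0(1)] by (simp add: E_def)
  have bas: "0 \<le> cdfn m l y \<and> cdfn m l y \<le> 1" using cdfn_basic[of l m, OF 0(1)] by blast
  show ?case unfolding e using sup bas by auto
next
  case (Suc n)
  have pos: "\<And>i. shiftl l i > 0" using Suc.prems by (simp add: shiftl_def)
  note IH = Suc.IH[where l="shiftl l", OF pos]
  have l0: "l 0 > 0" using Suc.prems by simp
  define E where "E = (\<Sum>i\<in>{n..<n+m}. shiftl l i)/2"
  have e: "(\<Sum>i\<in>{Suc n..<Suc n+m}. l i)/2 = E"
    unfolding E_def shiftl_def using sum.shift_bounds_Suc_ivl[of l n "n+m"] by (simp del: sum.op_ivl_Suc)
  have mb: "\<And>k. mono (cdfn k (shiftl l))" using cdfn_basic[of "shiftl l", OF pos] by blast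
  let ?c = "l 0 / 2"
  have up: "integral {y - ?c .. y + ?c} (cdfn (n+m) (shiftl l)) \<le> integral {y - ?c .. y + ?c} (\<lambda>z. cdfn n (shiftl l) (z + E))"
  proof (rule integral_le)
    show "cdfn (n + m) (shiftl l) integrable_on {y - ?c..y + ?c}" by (rule mono_integrable[OF mb])
    have "mono (\<lambda>z. cdfn n (shiftl l) (z + E))" using mb[of n] by (auto simp: mono_def)
    then show "(\<lambda>z. cdfn n (shiftl l) (z + E)) integrable_on {y - ?c..y + ?c}" by (rule mono_integrable)
    show "cdfn (n + m) (shiftl l) x \<le> cdfn n (shiftl l) (x + E)" for x
      using IH[of x] by (simp add: E_def)
  qed
  have lo: "integral {y - ?c .. y + ?c} (\<lambda>z. cdfn n (shiftl l) (z - E)) \<le> integral {y - ?c .. y + ?c} (cdfn (n+m) (shiftl l))"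
  proof (rule integral_le)
    show "cdfn (n + m) (shiftl l) integrable_on {y - ?c..y + ?c}" by (rule mono_integrable[OF mb])
    have "mono (\<lambda>z. cdfn n (shiftl l) (z - E))" using mb[of n] by (auto simp: mono_def)
    then show "(\<lambda>z. cdfn n (shiftl l) (z - E)) integrable_on {y - ?c..y + ?c}" by (rule mono_integrable)
    show "cdfn n (shiftl l) (x - E) \<le> cdfn (n + m) (shiftl l) x" for x
      using IH[of x] by (simp add: E_def)
  qed
  have s1: "integral {y - ?c .. y + ?c} (\<lambda>z. cdfn n (shiftl l) (z + E)) = integral {(y + E) - ?c .. (y + E) + ?c} (cdfn n (shiftl l))"
    by (subst shift_integral) (simp add: algebra_simps)
  have s2: "integral {y - ?c .. y + ?c} (\<lambda>z. cdfn n (shiftl l) (z - E)) = integral {(y - E) - ?c .. (y - E) + ?c} (cdfn n (shiftl l))"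
    using shift_integral[where g="cdfn n (shiftl l)" and a="y - ?c" and b="y + ?c" and d="-E"] by (simp add: algebra_simps)
  show ?case unfolding e using up lo s1 s2 l0 by (simp add: divide_right_mono)
qed

lemma int_split:
  fixes g :: "real \<Rightarrow> real"
  assumes "mono g" "a \<le> t1" "t1 \<le> t2"
  shows "integral {t1..t2} g = integral {a..t2} g - integral {a..t1} g"
  using Henstock_Kurzweil_Integration.integral_combine[OF assms(2,3) mono_integrable[OF assms(1)]] by simp

lemma window_lip:
  fixes g :: "real \<Rightarrow> real"
  assumes "mono g" "\<And>z. 0 \<le> g z" "\<And>z. g z \<le> 1" "y1 \<le> y2" "c \<ge> 0"
  shows "integral {y2 - c .. y2 + c} g - integral {y1 - c .. y1 + c} g \<le> y2 - y1"
proof -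
  define a where "a = y1 - c"
  define P where "P t = integral {a..t} g" for t
  have w: "integral {y - c .. y + c} g = P (y + c) - P (y - c)" if "y \<ge> y1" for y
    unfolding P_def by (rule int_split[OF assms(1)]) (use that assms in \<open>auto simp: a_def\<close>)
  have d1: "P (y2 + c) - P (y1 + c) = integral {y1 + c .. y2 + c} g"
    unfolding P_def by (rule int_split[OF assms(1), symmetric]) (use assms in \<open>auto simp: a_def\<close>)
  have d2: "P (y2 - c) - P (y1 - c) = integral {y1 - c .. y2 - c} g"
    unfolding P_def by (rule int_split[OF assms(1), symmetric]) (use assms in \<open>auto simp: a_def\<close>)
  have "integral {y1 + c .. y2 + c} g \<le> y2 - y1"
    using int_bounds01(2)[OF assms(1,2,3), of "y1 + c" "y2 + c"] assms(4) by simp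
  moreover have "0 \<le> integral {y1 - c .. y2 - c} g"
    using int_bounds01(1)[OF assms(1,2,3), of "y1 - c" "y2 - c"] assms(4) by simp
  ultimately show ?thesis using w[of y1] w[of y2] d1 d2 assms(4) by simp
qed

lemma cdfn_lip:
  assumes "\<And>i. l i > 0" "y1 \<le> y2"
  shows "cdfn (Suc n) l y2 - cdfn (Suc n) l y1 \<le> (y2 - y1) / l 0"
proof -
  have pos: "\<And>i. shiftl l i > 0" using assms by (simp add: shiftl_def)
  have bb: "mono (cdfn n (shiftl l)) \<and> (\<forall>y. 0 \<le> cdfn n (shiftl l) y \<and> cdfn n (shiftl l) y \<le> 1)"
    by (rule cdfn_basic) (use pos in auto)
  have b: "mono (cdfn n (shiftl l))" "\<And>z. 0 \<le> cdfn n (shiftl l) z" "\<And>z. cdfn n (shiftl l) z \<le> 1"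
    using bb by blast+
  have l0: "l 0 > 0" using assms by simp
  have "integral {y2 - l 0/2 .. y2 + l 0/2} (cdfn n (shiftl l)) - integral {y1 - l 0/2 .. y1 + l 0/2} (cdfn n (shiftl l)) \<le> y2 - y1"
    by (rule window_lip[OF b assms(2)]) (use l0 in simp)
  then show ?thesis using l0 by (simp add: diff_divide_distrib[symmetric] divide_right_mono)
qed


definition tailsum :: "(nat \<Rightarrow> real) \<Rightarrow> nat \<Rightarrow> real" where
  "tailsum l k = (\<Sum>i. l (i + k))"

definition good :: "(nat \<Rightarrow> real) \<Rightarrow> bool" where
  "good l \<longleftrightarrow> (\<forall>i. l i > 0) \<and> summable l"

lemma good_shiftl: "good l \<Longrightarrow> good (shiftl l)"
  unfolding good_def shiftl_def using summable_Suc_iff[of l] by auto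

lemma good_pos: "good l \<Longrightarrow> l i > 0" by (simp add: good_def)

lemma block_le_tail:
  assumes "good l"
  shows "(\<Sum>i\<in>{k..<k+m}. l i) \<le> tailsum l k"
proof -
  have s: "summable (\<lambda>i. l (i + k))" using assms summable_iff_shift[of l k] by (simp add: good_def)
  have "(\<Sum>i\<in>{k..<k+m}. l i) = (\<Sum>i<m. l (i + k))"
  proof -
    have "(\<Sum>i\<in>{k..<k+m}. l i) = (\<Sum>i\<in>{0..<m}. l (i + k))"
      using sum.shift_bounds_nat_ivl[of l 0 k m] by (simp add: add.commute)
    then show ?thesis by (simp add: atLeast0LessThan)
  qed
  also have "\<dots> \<le> tailsum l k" unfolding tailsum_def
    by (rule sum_le_suminf[OF s]) (use assms in \<open>auto simp: good_def less_imp_le\<close>)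
  finally show ?thesis .
qed


lemma cdfn_close:
  assumes "good l"
  shows "\<bar>cdfn (Suc n + m) l y - cdfn (Suc n) l y\<bar> \<le> tailsum l (Suc n) / l 0"
proof -
  have pos: "\<And>i. l i > 0" using assms by (simp add: good_def)
  define E where "E = (\<Sum>i\<in>{Suc n..<Suc n+m}. l i)/2"
  have E0: "0 \<le> E" unfolding E_def using pos by (simp add: sum_nonneg less_imp_le)
  have ET: "2 * E \<le> tailsum l (Suc n)" unfolding E_def using block_le_tail[OF assms, of "Suc n" m] by linarith
  have sw: "cdfn (Suc n) l (y - E) \<le> cdfn (Suc n + m) l y \<and> cdfn (Suc n + m) l y \<le> cdfn (Suc n) l (y + E)"
    using cdfn_sandwich[of l "Suc n" y m, OF pos] by (simp add: E_def)
  have l1: "cdfn (Suc n) l (y + E) - cdfn (Suc n) l y \<le> E / l 0"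
    using cdfn_lip[of l y "y+E" n, OF pos] E0 by simp
  have l2: "cdfn (Suc n) l y - cdfn (Suc n) l (y - E) \<le> E / l 0"
    using cdfn_lip[of l "y - E" y n, OF pos] E0 by simp
  have l0: "l 0 > 0" using pos by simp
  have "E / l 0 \<le> tailsum l (Suc n) / l 0"
    using ET E0 l0 by (intro divide_right_mono) auto
  then show ?thesis using sw l1 l2 by linarith
qed

lemma cdfn_convergent:
  assumes "good l"
  shows "convergent (\<lambda>n. cdfn n l y)"
proof -
  have l0: "l 0 > 0" using assms by (simp add: good_def)
  have "Cauchy (\<lambda>n. cdfn n l y)"
  proof (rule CauchyI)
    fix e :: real assume e: "0 < e"
    have sl: "summable l" using assms by (simp add: good_def)
    have r: "0 < e * l 0 / 2" using e l0 by simp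
    obtain N where N0: "\<forall>n\<ge>N. norm (\<Sum>i. l (i + n)) < e * l 0 / 2"
      using suminf_exist_split[OF r sl] by blast
    have N: "norm (\<Sum>i. l (i + n)) < e * l 0 / 2" if "n \<ge> N" for n using N0 that by blast
    have b: "\<bar>cdfn p l y - cdfn (Suc N) l y\<bar> < e / 2" if "p \<ge> Suc N" for p
    proof -
      define m where "m = p - Suc N"
      have pm: "p = Suc N + m" using that by (simp add: m_def)
      have "\<bar>cdfn p l y - cdfn (Suc N) l y\<bar> \<le> tailsum l (Suc N) / l 0"
        using cdfn_close[OF assms, of N m y] pm by simp
      also have "\<dots> < (e * l 0 / 2) / l 0"
      proof -
        have "tailsum l (Suc N) < e * l 0 / 2" using N[of "Suc N"] unfolding tailsum_def by simp
        then show ?thesis using l0 divide_strict_right_mono by blast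
      qed
      also have "\<dots> = e / 2" using l0 by simp
      finally show ?thesis .
    qed
    show "\<exists>M. \<forall>m\<ge>M. \<forall>n\<ge>M. norm (cdfn m l y - cdfn n l y) < e"
    proof (intro exI allI impI)
      fix p q assume "Suc N \<le> p" "Suc N \<le> q"
      then have "\<bar>cdfn p l y - cdfn (Suc N) l y\<bar> < e / 2" "\<bar>cdfn q l y - cdfn (Suc N) l y\<bar> < e / 2"
        using b by blast+
      then show "norm (cdfn p l y - cdfn q l y) < e" unfolding real_norm_def by linarith
    qed
  qed
  then show ?thesis by (simp add: Cauchy_convergent_iff)
qed

definition Ginf :: "(nat \<Rightarrow> real) \<Rightarrow> real \<Rightarrow> real" where
  "Ginf l y = lim (\<lambda>n. cdfn n l y)"

lemma Ginf_lim: "good l \<Longrightarrow> (\<lambda>n. cdfn n l y) \<longlonglongrightarrow> Ginf l y"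
  unfolding Ginf_def using cdfn_convergent convergent_LIMSEQ_iff by blast


lemma Ginf_basic:
  assumes "good l"
  shows "0 \<le> Ginf l y" "Ginf l y \<le> 1" "mono (Ginf l)"
proof -
  have pos: "\<And>i. l i > 0" using assms by (simp add: good_def)
  have b: "\<And>n y. 0 \<le> cdfn n l y \<and> cdfn n l y \<le> 1" "\<And>n. mono (cdfn n l)"
    using cdfn_basic[of l, OF pos] by blast+
  show "0 \<le> Ginf l y" by (rule LIMSEQ_le_const[OF Ginf_lim[OF assms]]) (use b in auto)
  show "Ginf l y \<le> 1" by (rule LIMSEQ_le_const2[OF Ginf_lim[OF assms]]) (use b in auto)
  show "mono (Ginf l)"
  proof (rule monoI)
    fix x y :: real assume "x \<le> y"
    then show "Ginf l x \<le> Ginf l y"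
      by (intro LIMSEQ_le[OF Ginf_lim[OF assms] Ginf_lim[OF assms]]) (use b in \<open>auto simp: mono_def\<close>)
  qed
qed

lemma Ginf_lip:
  assumes "good l" "y1 \<le> y2"
  shows "Ginf l y2 - Ginf l y1 \<le> (y2 - y1) / l 0"
proof -
  have pos: "\<And>i. l i > 0" using assms by (simp add: good_def)
  have t: "(\<lambda>n. cdfn (Suc n) l y2 - cdfn (Suc n) l y1) \<longlonglongrightarrow> Ginf l y2 - Ginf l y1"
    by (intro tendsto_diff) (use Ginf_lim[OF assms(1)] LIMSEQ_Suc in blast)+
  have c: "cdfn (Suc n) l y2 - cdfn (Suc n) l y1 \<le> (y2 - y1) / l 0" for n
    by (rule cdfn_lip[of l y1 y2 n, OF pos assms(2)])
  show ?thesis by (rule LIMSEQ_le_const2[OF t]) (use c in blast)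
qed

lemma Ginf_absdiff:
  assumes "good l"
  shows "\<bar>Ginf l x - Ginf l y\<bar> \<le> \<bar>x - y\<bar> / l 0"
proof (cases "x \<le> y")
  case True
  have "Ginf l x \<le> Ginf l y" using Ginf_basic(3)[OF assms] True by (simp add: monoD)
  then show ?thesis using Ginf_lip[OF assms True] True by simp
next
  case False
  then have xy: "y \<le> x" by simp
  have "Ginf l y \<le> Ginf l x" using Ginf_basic(3)[OF assms] xy by (simp add: monoD)
  then show ?thesis using Ginf_lip[OF assms xy] xy by simp
qed

lemma Ginf_cont:
  assumes "good l"
  shows "continuous_on UNIV (Ginf l)"
proof (rule lipschitz_on_continuous_on)
  have l0: "l 0 > 0" using assms by (simp add: good_def)
  show "(1 / l 0)-lipschitz_on UNIV (Ginf l)"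
    unfolding lipschitz_on_def dist_real_def using Ginf_absdiff[OF assms] l0 by auto
qed

lemma Ginf_support:
  assumes "good l"
  shows "y < - suminf l / 2 \<Longrightarrow> Ginf l y = 0" "y \<ge> suminf l / 2 \<Longrightarrow> Ginf l y = 1"
proof -
  have pos: "\<And>i. l i > 0" using assms by (simp add: good_def)
  have ps: "\<And>n. (\<Sum>i<n. l i) \<le> suminf l"
    using assms by (intro sum_le_suminf) (auto simp: good_def less_imp_le)
  show "Ginf l y = 0" if "y < - suminf l / 2"
  proof -
    have "cdfn n l y = 0" for n
    proof -
      have "y < -(\<Sum>i<n. l i)/2" using ps[of n] that by linarith
      then show ?thesis using cdfn_support[of l y n, OF pos] by blast
    qed
    then show ?thesis using LIMSEQ_unique[OF Ginf_lim[OF assms, of y]] by simp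
  qed
  show "Ginf l y = 1" if "y \<ge> suminf l / 2"
  proof -
    have "cdfn n l y = 1" for n
    proof -
      have "y \<ge> (\<Sum>i<n. l i)/2" using ps[of n] that by linarith
      then show ?thesis using cdfn_support[of l y n, OF pos] by blast
    qed
    then show ?thesis using LIMSEQ_unique[OF Ginf_lim[OF assms, of y]] by simp
  qed
qed

lemma Ginf_fix:
  assumes "good l"
  shows "Ginf l y = integral {y - l 0/2 .. y + l 0/2} (Ginf (shiftl l)) / l 0"
proof -
  have g': "good (shiftl l)" by (rule good_shiftl[OF assms])
  have pos': "\<And>i. shiftl l i > 0" using g' by (simp add: good_def)
  have b: "\<And>n y. 0 \<le> cdfn n (shiftl l) y \<and> cdfn n (shiftl l) y \<le> 1" "\<And>n. mono (cdfn n (shiftl l))"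
    using cdfn_basic[of "shiftl l", OF pos'] by blast+
  let ?S = "{y - l 0/2 .. y + l 0/2}"
  have dc: "(\<lambda>k. integral ?S (cdfn k (shiftl l))) \<longlonglongrightarrow> integral ?S (Ginf (shiftl l))"
  proof (rule dominated_convergence(2)[where h="\<lambda>_. 1"])
    show "\<And>k. cdfn k (shiftl l) integrable_on ?S" by (rule mono_integrable[OF b(2)])
    show "(\<lambda>_. 1::real) integrable_on ?S" by (rule integrable_continuous_real) (rule continuous_on_const)
    show "\<And>k x. x \<in> ?S \<Longrightarrow> norm (cdfn k (shiftl l) x) \<le> 1" using b(1) by auto
    show "\<And>x. x \<in> ?S \<Longrightarrow> (\<lambda>k. cdfn k (shiftl l) x) \<longlonglongrightarrow> Ginf (shiftl l) x"
      using Ginf_lim[OF g'] by blast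
  qed
  have "(\<lambda>k. cdfn (Suc k) l y) \<longlonglongrightarrow> integral ?S (Ginf (shiftl l)) / l 0"
  proof -
    have "l 0 \<noteq> 0" using good_pos[OF assms, of 0] by simp
    then show ?thesis using tendsto_divide[OF dc tendsto_const, of "l 0"] by simp
  qed
  moreover have "(\<lambda>k. cdfn (Suc k) l y) \<longlonglongrightarrow> Ginf l y"
    using Ginf_lim[OF assms] LIMSEQ_Suc by blast
  ultimately show ?thesis using LIMSEQ_unique by blast
qed


lemma shift_deriv:
  assumes "(f has_real_derivative D) (at (y + c))"
  shows "((\<lambda>z. f (z + c)) has_real_derivative D) (at y)"
  using assms DERIV_shift by blast

lemma window_deriv:
  fixes g :: "real \<Rightarrow> real"
  assumes "continuous_on UNIV g" "c \<ge> 0"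
  shows "((\<lambda>y. integral {y - c .. y + c} g) has_real_derivative (g (y + c) - g (y - c))) (at y)"
proof -
  define a where "a = y - c - 1"
  define b where "b = y + c + 1"
  define P where "P t = integral {a..t} g" for t
  have cg: "continuous_on {a..b} g" using assms(1) continuous_on_subset by blast
  have dP: "(P has_real_derivative g t) (at t)" if "a < t" "t < b" for t
  proof -
    have "(P has_real_derivative g t) (at t within {a..b})" unfolding P_def
      by (rule integral_has_real_derivative[OF cg]) (use that in auto)
    moreover have "at t within {a..b} = at t" by (rule at_within_interior) (use that in auto)
    ultimately show ?thesis by simp
  qed
  have d1: "((\<lambda>z. P (z + c)) has_real_derivative g (y + c)) (at y)"
    by (rule shift_deriv, rule dP) (use assms in \<open>auto simp: a_def b_def\<close>)
  have d2: "((\<lambda>z. P (z + (-c))) has_real_derivative g (y - c)) (at y)"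
    using shift_deriv[of P "g (y - c)" y "-c"] dP[of "y - c"] assms by (auto simp: a_def b_def)
  have d: "((\<lambda>z. P (z + c) - P (z + (-c))) has_real_derivative g (y + c) - g (y - c)) (at y)"
    by (rule DERIV_diff[OF d1 d2])
  show ?thesis
  proof (rule has_field_derivative_transform_within_open[OF d, of "ball y 1"])
    show "open (ball y 1)" by simp
    show "y \<in> ball y 1" by simp
    fix z assume z: "z \<in> ball y 1"
    then have za: "a \<le> z - c" "z - c \<le> z + c" "z + c \<le> b" using assms(2)
      by (auto simp: a_def b_def dist_real_def)
    have ig: "g integrable_on {a..z + c}"
      by (rule integrable_continuous_real) (use cg za in \<open>auto intro: continuous_on_subset\<close>)
    have "integral {a..z - c} g + integral {z - c..z + c} g = integral {a..z + c} g"
      by (rule Henstock_Kurzweil_Integration.integral_combine[OF za(1,2) ig])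
    then show "P (z + c) - P (z + (-c)) = integral {z - c..z + c} g" by (simp add: P_def)
  qed
qed

fun Dd :: "nat \<Rightarrow> (nat \<Rightarrow> real) \<Rightarrow> real \<Rightarrow> real" where
  "Dd 0 l y = Ginf l y"
| "Dd (Suc k) l y = (Dd k (shiftl l) (y + l 0 / 2) - Dd k (shiftl l) (y - l 0 / 2)) / l 0"

lemma Dd_deriv:
  assumes "good l"
  shows "(Dd k l has_real_derivative Dd (Suc k) l y) (at y)"
  using assms
proof (induction k arbitrary: l y)
  case 0
  have g': "good (shiftl l)" by (rule good_shiftl[OF 0])
  have l0: "l 0 > 0" using good_pos[OF 0] by simp
  have e: "Dd 0 l = (\<lambda>y. integral {y - l 0/2 .. y + l 0/2} (Ginf (shiftl l)) / l 0)"
    using Ginf_fix[OF 0] by (auto simp: fun_eq_iff)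
  have "((\<lambda>y. integral {y - l 0/2 .. y + l 0/2} (Ginf (shiftl l)) / l 0) has_real_derivative
        (Ginf (shiftl l) (y + l 0/2) - Ginf (shiftl l) (y - l 0/2)) / l 0) (at y)"
    by (rule DERIV_cdivide, rule window_deriv[OF Ginf_cont[OF g']]) (use l0 in simp)
  then show ?case unfolding e by simp
next
  case (Suc k)
  have g': "good (shiftl l)" by (rule good_shiftl[OF Suc.prems])
  note IH = Suc.IH[where l="shiftl l", OF g']
  have d1: "((\<lambda>z. Dd k (shiftl l) (z + l 0/2)) has_real_derivative Dd (Suc k) (shiftl l) (y + l 0/2)) (at y)"
    by (rule shift_deriv, rule IH)
  have d2: "((\<lambda>z. Dd k (shiftl l) (z + (- (l 0/2)))) has_real_derivative Dd (Suc k) (shiftl l) (y + (- (l 0/2)))) (at y)"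
    by (rule shift_deriv, rule IH)
  have "((\<lambda>z. (Dd k (shiftl l) (z + l 0/2) - Dd k (shiftl l) (z + (- (l 0/2)))) / l 0) has_real_derivative
     (Dd (Suc k) (shiftl l) (y + l 0/2) - Dd (Suc k) (shiftl l) (y + (- (l 0/2)))) / l 0) (at y)"
    by (rule DERIV_cdivide, rule DERIV_diff[OF d1 d2])
  then show ?case by simp
qed

lemma Dd_bound:
  assumes "good l"
  shows "\<bar>Dd k l y\<bar> \<le> 2 ^ k / (\<Prod>i<k. l i)"
  using assms
proof (induction k arbitrary: l y)
  case 0
  then show ?case using Ginf_basic[OF 0] by simp
next
  case (Suc k)
  have g': "good (shiftl l)" by (rule good_shiftl[OF Suc.prems])
  note IH = Suc.IH[where l="shiftl l", OF g']
  have l0: "l 0 > 0" using good_pos[OF Suc.prems] by simp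
  have "\<bar>Dd (Suc k) l y\<bar> = \<bar>Dd k (shiftl l) (y + l 0 / 2) - Dd k (shiftl l) (y - l 0 / 2)\<bar> / l 0"
    using l0 by (simp add: abs_div)
  also have "\<dots> \<le> (2 ^ k / (\<Prod>i<k. shiftl l i) + 2 ^ k / (\<Prod>i<k. shiftl l i)) / l 0"
    using IH[of "y + l 0 / 2"] IH[of "y - l 0 / 2"] l0 by (intro divide_right_mono) linarith+
  also have "\<dots> = 2 ^ Suc k / (\<Prod>i<Suc k. l i)"
    unfolding prod.lessThan_Suc_shift shiftl_def by simp
  finally show ?case .
qed

lemma suminf_shiftl: "good l \<Longrightarrow> suminf l = l 0 + suminf (shiftl l)"
  using suminf_split_head[of l] unfolding good_def shiftl_def by simp

lemma suminf_good_pos: "good l \<Longrightarrow> suminf l > 0"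
  by (rule suminf_pos) (auto simp: good_def)

lemma Dd_support:
  assumes "good l" "\<bar>y\<bar> > suminf l / 2"
  shows "Dd (Suc k) l y = 0"
  using assms
proof (induction k arbitrary: l y)
  case 0
  have g': "good (shiftl l)" by (rule good_shiftl[OF 0(1)])
  have S: "suminf l = l 0 + suminf (shiftl l)" by (rule suminf_shiftl[OF 0(1)])
  have l0: "l 0 > 0" using good_pos[OF 0(1)] by simp
  show ?case
  proof (cases "y > 0")
    case True
    then have "y > suminf l / 2" using 0(2) by simp
    then have "Ginf (shiftl l) (y + l 0/2) = 1" "Ginf (shiftl l) (y - l 0/2) = 1"
      using Ginf_support(2)[OF g'] S l0 by auto
    then show ?thesis by simp
  next
    case False
    then have "y < - suminf l / 2" using 0(2) by simp
    then have "Ginf (shiftl l) (y + l 0/2) = 0" "Ginf (shiftl l) (y - l 0/2) = 0"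
      using Ginf_support(1)[OF g'] S l0 by auto
    then show ?thesis by simp
  qed
next
  case (Suc k)
  have g': "good (shiftl l)" by (rule good_shiftl[OF Suc.prems(1)])
  have S: "suminf l = l 0 + suminf (shiftl l)" by (rule suminf_shiftl[OF Suc.prems(1)])
  have l0: "l 0 > 0" using good_pos[OF Suc.prems(1)] by simp
  have a1: "\<bar>y + l 0 / 2\<bar> > suminf (shiftl l) / 2" using Suc.prems(2) S l0 by linarith
  have a2: "\<bar>y - l 0 / 2\<bar> > suminf (shiftl l) / 2" using Suc.prems(2) S l0 by linarith
  show ?case using Suc.IH[where l="shiftl l", OF g' a1] Suc.IH[where l="shiftl l", OF g' a2]
    by (simp del: Dd.simps(2) add: Dd.simps(2)[of "Suc k"])
qed

definition chiD :: "nat \<Rightarrow> (nat \<Rightarrow> real) \<Rightarrow> real \<Rightarrow> real" where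
  "chiD k l x = Dd k l (x + suminf l) - Dd k l (x - suminf l)"

lemma chiD_deriv:
  assumes "good l"
  shows "(chiD k l has_real_derivative chiD (Suc k) l x) (at x)"
proof -
  have d1: "((\<lambda>z. Dd k l (z + suminf l)) has_real_derivative Dd (Suc k) l (x + suminf l)) (at x)"
    by (rule shift_deriv, rule Dd_deriv[OF assms])
  have d2: "((\<lambda>z. Dd k l (z + (- suminf l))) has_real_derivative Dd (Suc k) l (x + (- suminf l))) (at x)"
    by (rule shift_deriv, rule Dd_deriv[OF assms])
  have e: "chiD k l = (\<lambda>z. Dd k l (z + suminf l) - Dd k l (z + (- suminf l)))"
    by (simp add: fun_eq_iff chiD_def)
  show ?thesis unfolding e using DERIV_diff[OF d1 d2] by (simp add: chiD_def)
qed

lemma chiD_bound: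
  assumes "good l"
  shows "\<bar>chiD k l x\<bar> \<le> 2 * 2 ^ k / (\<Prod>i<k. l i)"
  using Dd_bound[OF assms, of k "x + suminf l"] Dd_bound[OF assms, of k "x - suminf l"]
  unfolding chiD_def by linarith

lemma chiD_support:
  assumes "good l" "\<bar>x\<bar> > 3 / 2 * suminf l"
  shows "chiD k l x = 0"
proof -
  have w: "suminf l > 0" by (rule suminf_good_pos[OF assms(1)])
  show ?thesis
  proof (cases k)
    case 0
    show ?thesis
    proof (cases "x > 0")
      case True
      then have "Ginf l (x + suminf l) = 1" "Ginf l (x - suminf l) = 1"
        using Ginf_support(2)[OF assms(1)] assms(2) w by auto
      then show ?thesis using 0 by (simp add: chiD_def)
    next
      case False
      then have "Ginf l (x + suminf l) = 0" "Ginf l (x - suminf l) = 0"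
        using Ginf_support(1)[OF assms(1)] assms(2) w by auto
      then show ?thesis using 0 by (simp add: chiD_def)
    qed
  next
    case (Suc k')
    have a1: "\<bar>x + suminf l\<bar> > suminf l / 2" using assms(2) w by linarith
    have a2: "\<bar>x - suminf l\<bar> > suminf l / 2" using assms(2) w by linarith
    show ?thesis using Dd_support[OF assms(1) a1, of k'] Dd_support[OF assms(1) a2, of k'] 
      unfolding chiD_def Suc by (simp del: Dd.simps)
  qed
qed

lemma chiD_at0:
  assumes "good l"
  shows "chiD k l 0 = (if k = 0 then 1 else 0)"
proof -
  have w: "suminf l > 0" by (rule suminf_good_pos[OF assms(1)])
  show ?thesis
  proof (cases k)
    case 0
    have "Ginf l (suminf l) = 1" using Ginf_support(2)[OF assms(1)] w by auto
    moreover have "Ginf l (- suminf l) = 0" using Ginf_support(1)[OF assms(1)] w by auto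
    ultimately show ?thesis using 0 by (simp add: chiD_def)
  next
    case (Suc k')
    have a1: "\<bar>0 + suminf l\<bar> > suminf l / 2" using w by simp
    have a2: "\<bar>0 - suminf l\<bar> > suminf l / 2" using w by simp
    show ?thesis using Dd_support[OF assms(1) a1, of k'] Dd_support[OF assms(1) a2, of k'] 
      unfolding chiD_def Suc by (simp del: Dd.simps)
  qed
qed


lemma leibniz_step:
  fixes A B :: "nat \<Rightarrow> real \<Rightarrow> real"
  shows "(\<Sum>m\<le>k. real (k choose m) * (A (Suc k - m) x * B m x + A (k - m) x * B (Suc m) x))
       = (\<Sum>m\<le>Suc k. real (Suc k choose m) * A (Suc k - m) x * B m x)"
proof -
  have s1: "(\<Sum>m\<le>k. real (k choose m) * A (Suc k - m) x * B m x)
          = (\<Sum>m\<le>Suc k. real (k choose m) * A (Suc k - m) x * B m x)"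
    by simp
  also have "\<dots> = A (Suc k) x * B 0 x + (\<Sum>m\<le>k. real (k choose Suc m) * A (k - m) x * B (Suc m) x)"
    by (subst sum.atMost_Suc_shift) simp
  finally have s1': "(\<Sum>m\<le>k. real (k choose m) * A (Suc k - m) x * B m x)
      = A (Suc k) x * B 0 x + (\<Sum>m\<le>k. real (k choose Suc m) * A (k - m) x * B (Suc m) x)" .
  have r: "(\<Sum>m\<le>Suc k. real (Suc k choose m) * A (Suc k - m) x * B m x)
      = A (Suc k) x * B 0 x + (\<Sum>m\<le>k. (real (k choose m) + real (k choose Suc m)) * A (k - m) x * B (Suc m) x)"
    by (subst sum.atMost_Suc_shift) simp
  have "(\<Sum>m\<le>k. real (k choose m) * (A (Suc k - m) x * B m x + A (k - m) x * B (Suc m) x))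
      = (\<Sum>m\<le>k. real (k choose m) * A (Suc k - m) x * B m x) + (\<Sum>m\<le>k. real (k choose m) * A (k - m) x * B (Suc m) x)"
    by (simp add: sum.distrib[symmetric] algebra_simps)
  also have "\<dots> = A (Suc k) x * B 0 x + (\<Sum>m\<le>k. (real (k choose m) + real (k choose Suc m)) * A (k - m) x * B (Suc m) x)"
    unfolding s1' by (simp add: sum.distrib[symmetric] algebra_simps)
  finally show ?thesis using r by simp
qed

lemma leibniz_deriv:
  fixes A B :: "nat \<Rightarrow> real \<Rightarrow> real"
  assumes dA: "\<And>k x. (A k has_real_derivative A (Suc k) x) (at x)"
    and dB: "\<And>k x. (B k has_real_derivative B (Suc k) x) (at x)"
  shows "((\<lambda>x. \<Sum>m\<le>k. real (k choose m) * A (k - m) x * B m x) has_real_derivative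
          (\<Sum>m\<le>Suc k. real (Suc k choose m) * A (Suc k - m) x * B m x)) (at x)"
proof -
  have "((\<lambda>x. \<Sum>m\<le>k. real (k choose m) * A (k - m) x * B m x) has_real_derivative
        (\<Sum>m\<le>k. real (k choose m) * (A (Suc (k - m)) x * B m x + A (k - m) x * B (Suc m) x))) (at x)"
  proof (rule DERIV_sum)
    fix m assume "m \<in> {..k}"
    have "((\<lambda>x. A (k - m) x * B m x) has_real_derivative A (Suc (k - m)) x * B m x + A (k - m) x * B (Suc m) x) (at x)"
      using DERIV_mult[OF dA[of "k - m" x] dB[of m x]] by (simp add: algebra_simps)
    then show "((\<lambda>x. real (k choose m) * A (k - m) x * B m x) has_real_derivative
        real (k choose m) * (A (Suc (k - m)) x * B m x + A (k - m) x * B (Suc m) x)) (at x)"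
      using DERIV_cmult[where f="\<lambda>x. A (k - m) x * B m x" and c="real (k choose m)"] by (simp add: mult.assoc)
  qed
  moreover have "(\<Sum>m\<le>k. real (k choose m) * (A (Suc (k - m)) x * B m x + A (k - m) x * B (Suc m) x))
       = (\<Sum>m\<le>k. real (k choose m) * (A (Suc k - m) x * B m x + A (k - m) x * B (Suc m) x))"
    by (intro sum.cong refl) (simp add: Suc_diff_le)
  ultimately show ?thesis using leibniz_step[of k A x B] by simp
qed

definition PA :: "nat \<Rightarrow> nat \<Rightarrow> real \<Rightarrow> real" where
  "PA j k x = (if k \<le> j then x ^ (j - k) / fact (j - k) else 0)"

lemma PA_deriv: "(PA j k has_real_derivative PA j (Suc k) x) (at x)"
proof (cases "k < j")
  case True
  define n where "n = j - Suc k"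
  have jk: "j - k = Suc n" using True by (simp add: n_def)
  have e: "PA j k = (\<lambda>x. x ^ Suc n / fact (Suc n))" using True by (auto simp: PA_def jk fun_eq_iff)
  have "((\<lambda>x. x ^ Suc n / fact (Suc n)) has_real_derivative (real (Suc n) * x ^ n) / fact (Suc n)) (at x)"
    by (rule DERIV_cdivide) (use DERIV_pow[of "Suc n" x UNIV] in simp)
  moreover have "(real (Suc n) * x ^ n) / fact (Suc n) = x ^ n / fact n"
  proof -
    have f: "(fact (Suc n)::real) = real (Suc n) * fact n" by (rule fact_Suc)
    have nz: "real (Suc n) \<noteq> 0" by (simp only: of_nat_eq_0_iff)
    show ?thesis unfolding f using mult_divide_mult_cancel_left[OF nz, of "x ^ n" "fact n"] by simp
  qed
  moreover have "PA j (Suc k) x = x ^ n / fact n" using True by (simp add: PA_def n_def)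
  ultimately show ?thesis unfolding e by simp
next
  case False
  have e: "PA j k = (\<lambda>x. if k = j then 1 else 0)" using False by (auto simp: PA_def fun_eq_iff)
  have "PA j (Suc k) x = 0" using False by (simp add: PA_def)
  then show ?thesis unfolding e by simp
qed

lemma PA_at0: "PA j k 0 = (if k = j then 1 else 0)"
  by (auto simp: PA_def)

lemma series_deriv:
  fixes G :: "nat \<Rightarrow> nat \<Rightarrow> real \<Rightarrow> real" and c :: "nat \<Rightarrow> real" and Bd :: "nat \<Rightarrow> nat \<Rightarrow> real"
  assumes dG: "\<And>j k x. (G j k has_real_derivative G j (Suc k) x) (at x)"
    and bd: "\<And>j k x. \<bar>c j * G j k x\<bar> \<le> Bd k j"
    and sb: "\<And>k. summable (Bd k)"
  shows "((\<lambda>x. \<Sum>j. c j * G j k x) has_real_derivative (\<Sum>j. c j * G j (Suc k) x)) (at x)"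
proof -
  have d: "\<And>j x. x \<in> UNIV \<Longrightarrow> ((\<lambda>x. c j * G j k x) has_field_derivative c j * G j (Suc k) x) (at x within UNIV)"
    using DERIV_cmult[OF dG] by simp
  have u: "uniformly_convergent_on UNIV (\<lambda>n x. \<Sum>i<n. c i * G i (Suc k) x)"
    unfolding uniformly_convergent_on_def
    by (rule exI, rule Weierstrass_m_test_ev[OF _ sb[of "Suc k"]]) (use bd in \<open>simp add: always_eventually\<close>)
  have s0: "summable (\<lambda>j. c j * G j k 0)"
    by (rule summable_comparison_test[OF _ sb[of k]]) (use bd in \<open>auto simp: real_norm_def\<close>)
  show ?thesis
    using has_field_derivative_series'(2)[OF convex_UNIV d u _ s0, of x] by simp
qed

lemma series_summable:
  fixes G :: "nat \<Rightarrow> nat \<Rightarrow> real \<Rightarrow> real" and c :: "nat \<Rightarrow> real" and Bd :: "nat \<Rightarrow> nat \<Rightarrow> real"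
  assumes bd: "\<And>j k x. \<bar>c j * G j k x\<bar> \<le> Bd k j"
    and sb: "\<And>k. summable (Bd k)"
  shows "\<bar>\<Sum>j. c j * G j k x\<bar> \<le> (\<Sum>j. Bd k j)"
proof -
  have s: "summable (\<lambda>j. \<bar>c j * G j k x\<bar>)"
    by (rule summable_comparison_test[OF _ sb[of k]]) (use bd in auto)
  have "\<bar>\<Sum>j. c j * G j k x\<bar> \<le> (\<Sum>j. \<bar>c j * G j k x\<bar>)"
    using summable_norm[of "\<lambda>j. c j * G j k x"] s by (simp add: real_norm_def)
  also have "\<dots> \<le> (\<Sum>j. Bd k j)" by (rule suminf_le[OF _ s sb]) (use bd in auto)
  finally show ?thesis .
qed

lemma series_at0:
  fixes G :: "nat \<Rightarrow> nat \<Rightarrow> real \<Rightarrow> real" and c :: "nat \<Rightarrow> real"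
  assumes "\<And>j. G j k 0 = (if j = k then 1 else 0)"
  shows "(\<Sum>j. c j * G j k 0) = c k"
proof -
  have "(\<lambda>j. c j * G j k 0) = (\<lambda>j. if j = k then c j else 0)" using assms by (auto simp: fun_eq_iff)
  then show ?thesis using sums_single[of k c] sums_unique by fastforce
qed


section \<open>Weight sequence basics\<close>

lemma ws_pos: "weight_seq M \<Longrightarrow> M k > 0"
  by (simp add: weight_seq_def)

lemma ws_M0: "weight_seq M \<Longrightarrow> M 0 = 1"
  by (simp add: weight_seq_def)

lemma ws_mu_mono: "weight_seq M \<Longrightarrow> mono (mu M)"
  unfolding weight_seq_def by (simp add: mono_iff_le_Suc)

lemma ws_mu_le: "weight_seq M \<Longrightarrow> a \<le> b \<Longrightarrow> mu M a \<le> mu M b"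
  using ws_mu_mono monoD by blast

lemma ws_mu_ge1: "weight_seq M \<Longrightarrow> mu M k \<ge> 1"
  using ws_mu_le[of M 0 k] by (simp add: mu_def)

lemma ws_mu_pos: "weight_seq M \<Longrightarrow> mu M k > 0"
  using ws_mu_ge1[of M k] by simp

lemma ws_M_Suc: "weight_seq M \<Longrightarrow> M (Suc k) = M k * mu M (Suc k)"
  using ws_pos[of M k] by (simp add: mu_def)

lemma ws_M_prod: "weight_seq M \<Longrightarrow> M (a + d) = M a * (\<Prod>u\<in>{a<..a+d}. mu M u)"
proof (induction d)
  case 0
  then show ?case by simp
next
  case (Suc d)
  have e: "{a<..a + Suc d} = insert (Suc (a + d)) {a<..a+d}" by auto
  have "M (a + Suc d) = M (a + d) * mu M (Suc (a + d))" using ws_M_Suc[OF Suc.prems] by simp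
  also have "\<dots> = M a * (\<Prod>u\<in>{a<..a+d}. mu M u) * mu M (Suc (a + d))" using Suc by simp
  also have "\<dots> = M a * (\<Prod>u\<in>{a<..a + Suc d}. mu M u)" unfolding e by (simp add: mult_ac)
  finally show ?case .
qed

lemma ws_M_mono: "weight_seq M \<Longrightarrow> a \<le> b \<Longrightarrow> M a \<le> M b"
proof -
  assume w: "weight_seq M" and ab: "a \<le> b"
  then obtain d where b: "b = a + d" using le_Suc_ex by blast
  have "1 \<le> (\<Prod>u\<in>{a<..a+d}. mu M u)" by (rule prod_ge_1) (use ws_mu_ge1[OF w] in auto)
  then show "M a \<le> M b" unfolding b ws_M_prod[OF w, of a d] using ws_pos[OF w, of a] by simp
qed

lemma ws_M_ge1: "weight_seq M \<Longrightarrow> M k \<ge> 1"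
  using ws_M_mono[of M 0 k] ws_M0[of M] by simp

lemma ws_M_ratio: "weight_seq M \<Longrightarrow> M (a + d) / M a = (\<Prod>u\<in>{a<..a+d}. mu M u)"
  using ws_M_prod[of M a d] ws_pos[of M a] by simp

section \<open>Tail sums\<close>

definition Tl :: "(nat \<Rightarrow> real) \<Rightarrow> nat \<Rightarrow> real" where
  "Tl M k = (\<Sum>i. 1 / mu M (i + k))"

lemma Tl_summable: "nonquasianalytic M \<Longrightarrow> summable (\<lambda>i. 1 / mu M (i + k))"
  unfolding nonquasianalytic_def using summable_iff_shift[of "\<lambda>k. 1 / mu M k" k] by simp

lemma Tl_pos: "weight_seq M \<Longrightarrow> nonquasianalytic M \<Longrightarrow> Tl M k > 0"
  unfolding Tl_def by (rule suminf_pos[OF Tl_summable]) (use ws_mu_pos in auto)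

lemma Tl_block:
  assumes "weight_seq M" "nonquasianalytic M"
  shows "(\<Sum>u\<in>{a<..a+d}. 1 / mu M u) \<le> Tl M (Suc a)"
proof -
  have "(\<Sum>u\<in>{a<..a+d}. 1 / mu M u) = (\<Sum>i<d. 1 / mu M (i + Suc a))"
  proof -
    have "{a<..a+d} = (\<lambda>i. i + Suc a) ` {..<d}"
    proof
      show "{a<..a + d} \<subseteq> (\<lambda>i. i + Suc a) ` {..<d}"
      proof
        fix u assume "u \<in> {a<..a + d}"
        then show "u \<in> (\<lambda>i. i + Suc a) ` {..<d}" by (intro image_eqI[of _ _ "u - Suc a"]) auto
      qed
    qed auto
    then show ?thesis by (simp add: sum.reindex inj_on_def)
  qed
  also have "\<dots> \<le> Tl M (Suc a)" unfolding Tl_def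
    by (rule sum_le_suminf[OF Tl_summable[OF assms(2)]]) (use ws_mu_pos[OF assms(1)] in \<open>auto simp: less_imp_le\<close>)
  finally show ?thesis .
qed

section \<open>AM-GM and exponential estimates\<close>

lemma amgm:
  fixes x :: "'a \<Rightarrow> real"
  assumes "finite A" "card A = K" "K > 0" "\<And>a. a \<in> A \<Longrightarrow> x a > 0"
  shows "(\<Prod>a\<in>A. x a) \<le> ((\<Sum>a\<in>A. x a) / K) ^ K"
proof -
  define c where "c = (\<Sum>a\<in>A. x a) / K"
  have Ane: "A \<noteq> {}" using assms by auto
  have c: "c > 0" unfolding c_def using assms Ane by (intro divide_pos_pos sum_pos) auto
  have "(\<Prod>a\<in>A. x a / c) \<le> (\<Prod>a\<in>A. exp (x a / c - 1))"
  proof (rule prod_mono)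
    fix a assume "a \<in> A"
    then show "0 \<le> x a / c \<and> x a / c \<le> exp (x a / c - 1)"
      using assms(4)[of a] c exp_ge_add_one_self[of "x a / c - 1"] by auto
  qed
  also have "\<dots> = exp (\<Sum>a\<in>A. (x a / c - 1))" by (simp add: exp_sum[OF assms(1)])
  also have "(\<Sum>a\<in>A. (x a / c - 1)) = (\<Sum>a\<in>A. x a) / c - K"
    using assms(2) by (simp add: sum_subtractf sum_divide_distrib)
  also have "\<dots> = 0"
  proof -
    have "(\<Sum>a\<in>A. x a) > 0" using assms Ane by (intro sum_pos) auto
    then show ?thesis using assms(3) unfolding c_def by simp
  qed
  finally have "(\<Prod>a\<in>A. x a / c) \<le> 1" by simp
  moreover have "(\<Prod>a\<in>A. x a / c) = (\<Prod>a\<in>A. x a) / c ^ K"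
    using assms(2) by (simp add: prod_dividef)
  ultimately show ?thesis using c by (simp add: c_def divide_le_eq)
qed

lemma pow_fact_le_exp: "(x::real) \<ge> 0 \<Longrightarrow> x ^ q / fact q \<le> exp x"
proof -
  assume x: "x \<ge> 0"
  have "(\<Sum>n<Suc q. x ^ n / fact n) \<le> exp x"
  proof -
    have e: "exp x = (\<Sum>n. x ^ n / fact n)" unfolding exp_def by (simp add: divide_inverse mult.commute scaleR_conv_of_real)
    have s: "summable (\<lambda>n. x ^ n / fact n)" using summable_exp[of x] by (simp add: divide_inverse mult.commute)
    show ?thesis unfolding e by (rule sum_le_suminf[OF s]) (use x in auto)
  qed
  moreover have "x ^ q / fact q \<le> (\<Sum>n<Suc q. x ^ n / fact n)"
    using x by (simp add: sum_nonneg)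
  ultimately show ?thesis by linarith
qed

lemma ratio_pow_le_exp:
  assumes "k > 0" "(j::real) \<ge> 0"
  shows "(j / real k) ^ k \<le> exp j"
proof (cases "j = 0")
  case True
  then show ?thesis using assms by (simp add: power_0_left)
next
  case False
  then have jp: "j > 0" using assms by simp
  have "(j / real k) ^ k = exp (real k * ln (j / real k))"
    using jp assms by (simp add: exp_of_nat_mult)
  also have "\<dots> \<le> exp j"
  proof -
    have "ln (j / real k) \<le> j / real k - 1" using jp assms by (intro ln_le_minus_one) auto
    then have "real k * ln (j / real k) \<le> real k * (j / real k - 1)" using assms by (intro mult_left_mono) auto
    also have "\<dots> \<le> j" using assms by (simp add: algebra_simps)
    finally show ?thesis by simp
  qed
  finally show ?thesis .
qed


definition lam :: "(nat \<Rightarrow> real) \<Rightarrow> nat \<Rightarrow> nat \<Rightarrow> real" where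
  "lam M n j = Tl M (n * j) / real (n * j)"

definition lens :: "(nat \<Rightarrow> real) \<Rightarrow> nat \<Rightarrow> nat \<Rightarrow> nat \<Rightarrow> real" where
  "lens M n j i = (if j = 0 then 1 / mu M (n * (i + 1)) else min (lam M n j) (1 / mu M (n * (i + 1))))"

lemma lam_pos: "weight_seq M \<Longrightarrow> nonquasianalytic M \<Longrightarrow> n \<ge> 1 \<Longrightarrow> j \<ge> 1 \<Longrightarrow> lam M n j > 0"
  unfolding lam_def using Tl_pos[of M "n*j"] by simp

lemma lens_good:
  assumes "weight_seq M" "nonquasianalytic M" "n \<ge> 1"
  shows "good (lens M n j)"
  unfolding good_def
proof
  show "\<forall>i. 0 < lens M n j i"
    using lam_pos[OF assms] ws_mu_pos[OF assms(1)] by (auto simp: lens_def)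
  have le: "norm (lens M n j i) \<le> 1 / mu M (i + 1)" for i
  proof -
    have "1 * (i + 1) \<le> n * (i + 1)" by (rule mult_le_mono1[OF assms(3)])
    then have "mu M (i + 1) \<le> mu M (n * (i + 1))" by (intro ws_mu_le[OF assms(1)]) simp
    then have a: "1 / mu M (n * (i + 1)) \<le> 1 / mu M (i + 1)"
      using ws_mu_pos[OF assms(1)] by (simp add: frac_le)
    have "0 < lens M n j i" using lam_pos[OF assms] ws_mu_pos[OF assms(1)] by (auto simp: lens_def)
    moreover have "lens M n j i \<le> 1 / mu M (n * (i + 1))" by (auto simp: lens_def)
    ultimately show ?thesis using a by simp
  qed
  show "summable (lens M n j)"
    by (rule summable_comparison_test'[OF Tl_summable[OF assms(2), of 1]]) (use le in auto)
qed

lemma sum_ivl_split: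
  fixes f :: "nat \<Rightarrow> real"
  shows "(\<Sum>u\<in>{a<..a+(d+e)}. f u) = (\<Sum>u\<in>{a<..a+d}. f u) + (\<Sum>u\<in>{a+d<..a+d+e}. f u)"
proof -
  have "{a<..a+(d+e)} = {a<..a+d} \<union> {a+d<..a+d+e}" by auto
  moreover have "{a<..a+d} \<inter> {a+d<..a+d+e} = {}" by auto
  ultimately show ?thesis by (simp add: sum.union_disjoint)
qed

lemma prod_ivl_split:
  fixes f :: "nat \<Rightarrow> real"
  shows "(\<Prod>u\<in>{a<..a+(d+e)}. f u) = (\<Prod>u\<in>{a<..a+d}. f u) * (\<Prod>u\<in>{a+d<..a+d+e}. f u)"
proof -
  have "{a<..a+(d+e)} = {a<..a+d} \<union> {a+d<..a+d+e}" by auto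
  moreover have "{a<..a+d} \<inter> {a+d<..a+d+e} = {}" by auto
  ultimately show ?thesis by (simp add: prod.union_disjoint)
qed

lemma blk_sum:
  assumes "weight_seq M"
  shows "real n * (\<Sum>i<K. 1 / mu M (n * (i + j + 1))) \<le> (\<Sum>u\<in>{n*j<..n*j + n*K}. 1 / mu M u)"
proof (induction K)
  case 0
  then show ?case by simp
next
  case (Suc K)
  have b: "real n * (1 / mu M (n * (K + j + 1))) \<le> (\<Sum>u\<in>{n*j + n*K<..n*j + n*K + n}. 1 / mu M u)"
  proof -
    have "real (card {n*j + n*K<..n*j + n*K + n}) * (1 / mu M (n * (K + j + 1))) \<le> (\<Sum>u\<in>{n*j + n*K<..n*j + n*K + n}. 1 / mu M u)"
    proof (rule sum_bounded_below)
      fix u assume "u \<in> {n*j + n*K<..n*j + n*K + n}"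
      then have "u \<le> n * (K + j + 1)" by (simp add: algebra_simps)
      then have "mu M u \<le> mu M (n * (K + j + 1))" by (rule ws_mu_le[OF assms])
      then show "1 / mu M (n * (K + j + 1)) \<le> 1 / mu M u" using ws_mu_pos[OF assms] by (simp add: frac_le)
    qed
    then show ?thesis by simp
  qed
  have "real n * (\<Sum>i<Suc K. 1 / mu M (n * (i + j + 1))) = real n * (\<Sum>i<K. 1 / mu M (n * (i + j + 1))) + real n * (1 / mu M (n * (K + j + 1)))"
    by (simp add: algebra_simps)
  also have "\<dots> \<le> (\<Sum>u\<in>{n*j<..n*j + n*K}. 1 / mu M u) + (\<Sum>u\<in>{n*j + n*K<..n*j + n*K + n}. 1 / mu M u)"
    using Suc b by linarith
  also have "\<dots> = (\<Sum>u\<in>{n*j<..n*j + (n*K + n)}. 1 / mu M u)"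
    using sum_ivl_split[of "\<lambda>u. 1 / mu M u" "n*j" "n*K" n] by simp
  also have "\<dots> = (\<Sum>u\<in>{n*j<..n*j + n * Suc K}. 1 / mu M u)" by (simp add: algebra_simps)
  finally show ?case .
qed

lemma lens_sum:
  assumes "weight_seq M" "nonquasianalytic M" "n \<ge> 1" "j \<ge> 1"
  shows "suminf (lens M n j) \<le> 2 * real j * lam M n j"
proof -
  let ?l = "lens M n j"
  have g: "good ?l" by (rule lens_good[OF assms(1-3)])
  have sl: "summable ?l" using g by (simp add: good_def)
  have lp: "lam M n j > 0" by (rule lam_pos[OF assms])
  have jl: "real j * lam M n j = Tl M (n * j) / real n" using assms(3,4) by (simp add: lam_def)
  have split: "suminf ?l = (\<Sum>i. ?l (i + j)) + (\<Sum>i<j. ?l i)"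
    by (rule suminf_split_initial_segment[OF sl])
  have p1: "(\<Sum>i<j. ?l i) \<le> real j * lam M n j"
  proof -
    have "(\<Sum>i<j. ?l i) \<le> (\<Sum>i<j. lam M n j)" by (rule sum_mono) (use assms(4) in \<open>auto simp: lens_def\<close>)
    then show ?thesis by simp
  qed
  have p2: "(\<Sum>i. ?l (i + j)) \<le> real j * lam M n j"
  proof (rule suminf_le_const)
    show "summable (\<lambda>i. ?l (i + j))" using sl summable_iff_shift[of ?l j] by simp
    fix K
    have a: "(\<Sum>i<K. ?l (i + j)) \<le> (\<Sum>i<K. 1 / mu M (n * (i + j + 1)))"
      by (rule sum_mono) (auto simp: lens_def)
    have b: "(\<Sum>u\<in>{n*j<..n*j + n*K}. 1 / mu M u) \<le> (\<Sum>u\<in>{n*j - 1<..n*j - 1 + (n*K + 1)}. 1 / mu M u)"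
    proof (rule sum_mono2)
      show "finite {n * j - 1<..n * j - 1 + (n * K + 1)}" by simp
      show "{n * j<..n * j + n * K} \<subseteq> {n * j - 1<..n * j - 1 + (n * K + 1)}" using assms(3,4) by auto
      show "\<And>b. b \<in> {n * j - 1<..n * j - 1 + (n * K + 1)} - {n * j<..n * j + n * K} \<Longrightarrow> 0 \<le> 1 / mu M b"
        using ws_mu_pos[OF assms(1)] by (simp add: less_imp_le)
    qed
    have c: "(\<Sum>u\<in>{n*j - 1<..n*j - 1 + (n*K + 1)}. 1 / mu M u) \<le> Tl M (n * j)"
      using Tl_block[OF assms(1,2), of "n*j - 1" "n*K + 1"] assms(3,4) by simp
    have "real n * (\<Sum>i<K. ?l (i + j)) \<le> Tl M (n * j)"
      using mult_left_mono[OF a, of "real n"] blk_sum[OF assms(1), where n=n and K=K and j=j] b c by simp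
    then show "(\<Sum>i<K. ?l (i + j)) \<le> real j * lam M n j" unfolding jl using assms(3)
      by (simp add: le_divide_eq mult.commute)
  qed
  show ?thesis using split p1 p2 by simp
qed

lemma prodmax:
  fixes \<nu> :: "nat \<Rightarrow> real"
  assumes "mono \<nu>" "\<And>t. \<nu> t > 0" "x > 0"
  shows "\<exists>r\<le>m. (\<Prod>i<m. max x (\<nu> (i + 1))) \<le> x ^ r * (\<Prod>t\<in>{r..<m}. \<nu> (t + 1))"
proof (induction m)
  case 0
  then show ?case by simp
next
  case (Suc m)
  then obtain r where r: "r \<le> m" "(\<Prod>i<m. max x (\<nu> (i + 1))) \<le> x ^ r * (\<Prod>t\<in>{r..<m}. \<nu> (t + 1))" by blast
  have P0: "0 \<le> (\<Prod>i<m. max x (\<nu> (i + 1)))" using assms by (intro prod_nonneg) (auto intro: le_max_iff_disj[THEN iffD2])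
  show ?case
  proof (cases "\<nu> (m + 1) \<le> x")
    case True
    have mono_sh: "(\<Prod>t\<in>{r..<m}. \<nu> (t + 1)) \<le> (\<Prod>t\<in>{Suc r..<Suc m}. \<nu> (t + 1))"
    proof -
      have "(\<Prod>t\<in>{Suc r..<Suc m}. \<nu> (t + 1)) = (\<Prod>t\<in>{r..<m}. \<nu> (Suc t + 1))"
        by (rule prod.shift_bounds_Suc_ivl)
      moreover have "(\<Prod>t\<in>{r..<m}. \<nu> (t + 1)) \<le> (\<Prod>t\<in>{r..<m}. \<nu> (Suc t + 1))"
        by (rule prod_mono) (use assms in \<open>auto simp: less_imp_le mono_def\<close>)
      ultimately show ?thesis by simp
    qed
    have "(\<Prod>i<Suc m. max x (\<nu> (i + 1))) = (\<Prod>i<m. max x (\<nu> (i + 1))) * x" using True by simp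
    also have "\<dots> \<le> x ^ r * (\<Prod>t\<in>{r..<m}. \<nu> (t + 1)) * x" using r(2) assms(3) by (simp add: mult_right_mono)
    also have "\<dots> \<le> x ^ r * (\<Prod>t\<in>{Suc r..<Suc m}. \<nu> (t + 1)) * x"
      using mono_sh assms(3) by (intro mult_right_mono mult_left_mono) auto
    also have "\<dots> = x ^ Suc r * (\<Prod>t\<in>{Suc r..<Suc m}. \<nu> (t + 1))" by (simp add: mult_ac)
    finally show ?thesis using r(1) by (intro exI[of _ "Suc r"]) auto
  next
    case False
    have "(\<Prod>i<Suc m. max x (\<nu> (i + 1))) = (\<Prod>i<m. max x (\<nu> (i + 1))) * \<nu> (m + 1)" using False by simp
    also have "\<dots> \<le> x ^ r * (\<Prod>t\<in>{r..<m}. \<nu> (t + 1)) * \<nu> (m + 1)"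
      using r(2) assms(2)[of "m+1"] by (simp add: mult_right_mono)
    also have "\<dots> = x ^ r * (\<Prod>t\<in>{r..<Suc m}. \<nu> (t + 1))"
      using r(1) by (simp add: prod.atLeastLessThan_Suc mult_ac)
    finally show ?thesis using r(1) by (intro exI[of _ r]) auto
  qed
qed

lemma lens_prod:
  assumes "weight_seq M" "nonquasianalytic M" "n \<ge> 1" "j \<ge> 1"
  shows "\<exists>r\<le>m. (\<Prod>i<m. 1 / lens M n j i) \<le> (1 / lam M n j) ^ r * (\<Prod>t\<in>{r..<m}. mu M (n * (t + 1)))"
proof -
  have lp: "lam M n j > 0" by (rule lam_pos[OF assms])
  have e: "1 / lens M n j i = max (1 / lam M n j) (mu M (n * (i + 1)))" for i
  proof -
    have "mu M (n * (i + 1)) > 0" by (rule ws_mu_pos[OF assms(1)])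
    then show ?thesis using lp assms(4) by (auto simp: lens_def min_def max_def field_simps)
  qed
  have m: "mono (\<lambda>t. mu M (n * t))"
    by (rule monoI) (use ws_mu_le[OF assms(1)] in simp)
  show ?thesis unfolding e
    using prodmax[OF m, of "1 / lam M n j" m] ws_mu_pos[OF assms(1)] lp by auto
qed

lemma lens0_prod: "(\<Prod>i<m. 1 / lens M n 0 i) = (\<Prod>t\<in>{0..<m}. mu M (n * (t + 1)))"
  by (simp add: lens_def atLeast0LessThan)

lemma QM:
  assumes "weight_seq M" "n \<ge> 1" "r \<le> m" "c \<ge> n * (r + 1)"
  shows "(\<Prod>t\<in>{r..<m}. mu M (n * (t + 1))) ^ n \<le> M (c + n * (m - r)) / M c"
proof -
  obtain d where md: "m = r + d" using assms(3) le_Suc_ex by blast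
  have "(\<Prod>t\<in>{r..<r + d}. mu M (n * (t + 1))) ^ n \<le> M (c + n * d) / M c"
  proof (induction d)
    case 0
    then show ?case using ws_pos[OF assms(1), of c] by simp
  next
    case (Suc d)
    have b: "mu M (n * (r + d + 1)) ^ n \<le> M (c + n * d + n) / M (c + n * d)"
    proof -
      have "mu M (n * (r + d + 1)) ^ n = (\<Prod>u\<in>{c + n*d<..c + n*d + n}. mu M (n * (r + d + 1)))"
        by simp
      also have "\<dots> \<le> (\<Prod>u\<in>{c + n*d<..c + n*d + n}. mu M u)"
      proof (rule prod_mono)
        fix u assume u: "u \<in> {c + n*d<..c + n*d + n}"
        have "n * (r + d + 1) \<le> u" using u assms(4) by (simp add: algebra_simps)
        then show "0 \<le> mu M (n * (r + d + 1)) \<and> mu M (n * (r + d + 1)) \<le> mu M u"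
          using ws_mu_le[OF assms(1)] ws_mu_pos[OF assms(1)] by (simp add: less_imp_le)
      qed
      also have "\<dots> = M (c + n * d + n) / M (c + n * d)"
        using ws_M_ratio[OF assms(1), of "c + n*d" n] by simp
      finally show ?thesis .
    qed
    have "(\<Prod>t\<in>{r..<r + Suc d}. mu M (n * (t + 1))) ^ n
        = (\<Prod>t\<in>{r..<r + d}. mu M (n * (t + 1))) ^ n * mu M (n * (r + d + 1)) ^ n"
      by (simp add: prod.atLeastLessThan_Suc power_mult_distrib)
    also have "\<dots> \<le> (M (c + n * d) / M c) * (M (c + n * d + n) / M (c + n * d))"
      by (rule mult_mono[OF Suc b]) (use ws_pos[OF assms(1)] ws_mu_pos[OF assms(1)] in \<open>auto intro!: divide_nonneg_nonneg less_imp_le\<close>)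
    also have "\<dots> = M (c + n * Suc d) / M c"
      using ws_pos[OF assms(1), of "c + n*d"] by (simp add: algebra_simps)
    finally show ?case .
  qed
  then show ?thesis using md by simp
qed


lemma powr_inv_pow: "a > 0 \<Longrightarrow> p > 0 \<Longrightarrow> (a powr (1 / real p)) ^ p = (a::real)"
  by (simp add: powr_realpow[symmetric] powr_powr)

lemma SV_unpack:
  assumes "SV_rel N M" "weight_seq M" "nonquasianalytic M" "\<And>k. N k > 0"
  shows "\<exists>s::nat. s \<ge> 1 \<and> (\<exists>C>0. \<forall>j i. j \<ge> 1 \<longrightarrow> i < j \<longrightarrow>
           N j * Tl M j ^ (j - i) \<le> real s ^ j * M i * (C * real j) ^ (j - i))"
proof -
  obtain s :: nat and C where s1: "s \<ge> 1" and H: "\<And>j. j \<ge> 1 \<Longrightarrow>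
      (1 / real j) * (MAX i\<in>{0..<j}. (N j / (real s ^ j * M i)) powr (1 / real (j - i))) * (\<Sum>k. 1 / mu M (k + j)) \<le> C"
    using assms(1) unfolding SV_rel_def by blast
  have main: "N j * Tl M j ^ (j - i) \<le> real s ^ j * M i * (C * real j) ^ (j - i) \<and> C > 0"
    if j: "j \<ge> 1" and ij: "i < j" for j i
  proof -
    define a where "a = N j / (real s ^ j * M i)"
    define X where "X = a powr (1 / real (j - i))"
    define T where "T = Tl M j"
    have a0: "a > 0" unfolding a_def using assms(4)[of j] ws_pos[OF assms(2), of i] s1 by simp
    have X0: "X > 0" unfolding X_def using a0 by simp
    have T0: "T > 0" unfolding T_def by (rule Tl_pos[OF assms(2,3)])
    have XM: "X \<le> (MAX i\<in>{0..<j}. (N j / (real s ^ j * M i)) powr (1 / real (j - i)))"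
      unfolding X_def a_def by (rule Max_ge) (use ij in auto)
    have "(1 / real j) * X * T \<le> C"
    proof -
      have "(1 / real j) * X * T \<le> (1 / real j) * (MAX i\<in>{0..<j}. (N j / (real s ^ j * M i)) powr (1 / real (j - i))) * T"
        using XM T0 j by (intro mult_right_mono mult_left_mono) auto
      then show ?thesis using H[OF j] unfolding T_def Tl_def by linarith
    qed
    then have XT: "X * T \<le> C * real j" using j by (simp add: field_simps)
    have Cp: "C > 0"
    proof -
      have "0 < X * T" using X0 T0 by simp
      then have "0 < C * real j" using XT by linarith
      then show ?thesis using j by (simp add: zero_less_mult_iff)
    qed
    have "X \<le> C * real j / T" using XT T0 by (simp add: le_divide_eq)
    then have "X ^ (j - i) \<le> (C * real j / T) ^ (j - i)" using X0 by (intro power_mono) auto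
    moreover have "X ^ (j - i) = a" unfolding X_def by (rule powr_inv_pow[OF a0]) (use ij in simp)
    ultimately have "a \<le> (C * real j) ^ (j - i) / T ^ (j - i)" by (simp add: power_divide)
    then have "a * T ^ (j - i) \<le> (C * real j) ^ (j - i)" using T0 by (simp add: le_divide_eq)
    then have "N j * T ^ (j - i) \<le> (C * real j) ^ (j - i) * (real s ^ j * M i)"
      unfolding a_def using ws_pos[OF assms(2), of i] s1 by (simp add: field_simps)
    then show ?thesis using Cp by (simp add: T_def mult_ac)
  qed
  have "C > 0" using main[of 1 0] by simp
  then show ?thesis using s1 main by blast
qed


lemma Cpow_le:
  fixes C :: real
  assumes "p \<le> q" "C > 0"
  shows "C ^ p \<le> max 1 C ^ q"
proof -
  have "C ^ p \<le> max 1 C ^ p" using assms by (intro power_mono) auto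
  also have "\<dots> \<le> max 1 C ^ q" using assms by (intro power_increasing) auto
  finally show ?thesis .
qed

lemma caseA:
  fixes M N :: "nat \<Rightarrow> real" and s C :: real
  assumes ws: "weight_seq M" and nq: "nonquasianalytic M" and n1: "n \<ge> 1"
    and s1: "s \<ge> 1" and C0: "C > 0" and Npos: "\<And>k. N k > 0"
    and SV: "\<And>j i. j \<ge> 1 \<Longrightarrow> i < j \<Longrightarrow> N j * Tl M j ^ (j - i) \<le> s ^ j * M i * (C * real j) ^ (j - i)"
    and ij: "i < j"
  shows "N (n*j) * lam M n j ^ (n*(j-i)) \<le> s ^ (n*j) * max 1 C ^ (n*j) * M (n*i)"
proof -
  define p where "p = n * (j - i)"
  define L where "L = lam M n j"
  have j1: "j \<ge> 1" using ij by simp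
  have nj0: "real (n * j) > 0" using n1 j1 by simp
  have nz: "real n * real j \<noteq> 0" using n1 j1 by simp
  have T: "Tl M (n*j) = L * real (n * j)" unfolding L_def lam_def using nz by simp
  have nij: "n * i < n * j" using ij n1 by simp
  have pe: "n * j - n * i = p" unfolding p_def by (simp add: diff_mult_distrib2)
  have "N (n*j) * Tl M (n*j) ^ p \<le> s ^ (n*j) * M (n*i) * (C * real (n*j)) ^ p"
    using SV[of "n*j" "n*i"] nij n1 j1 unfolding pe by simp
  then have "N (n*j) * L ^ p * real (n*j) ^ p \<le> s ^ (n*j) * M (n*i) * C ^ p * real (n*j) ^ p"
    unfolding T by (simp add: power_mult_distrib mult_ac)
  then have a: "N (n*j) * L ^ p \<le> s ^ (n*j) * M (n*i) * C ^ p"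
    using nj0 by (simp add: mult_le_cancel_right)
  have "C ^ p \<le> max 1 C ^ (n*j)" by (rule Cpow_le[OF _ C0]) (simp add: p_def)
  then have "s ^ (n*j) * M (n*i) * C ^ p \<le> s ^ (n*j) * M (n*i) * max 1 C ^ (n*j)"
    using ws_pos[OF ws, of "n*i"] s1 by (intro mult_left_mono) auto
  then show ?thesis using a unfolding p_def L_def by (simp add: mult_ac)
qed

lemma caseB:
  fixes M N :: "nat \<Rightarrow> real" and s C :: real
  assumes ws: "weight_seq M" and nq: "nonquasianalytic M" and n1: "n \<ge> 1"
    and s1: "s \<ge> 1" and C0: "C > 0" and Npos: "\<And>k. N k > 0"
    and SV: "\<And>j i. j \<ge> 1 \<Longrightarrow> i < j \<Longrightarrow> N j * Tl M j ^ (j - i) \<le> s ^ j * M i * (C * real j) ^ (j - i)"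
    and j1: "j \<ge> 1" and kk1: "kk \<ge> 1"
  shows "N (n*j) * lam M n j ^ n / lam M n j ^ (n*kk) \<le> (s * exp 1 * max 1 C) ^ (n*j) * M (n*j + n*kk - 1)"
proof -
  define L where "L = lam M n j"
  define T where "T = Tl M (n*j)"
  define a where "a = n*j - 1"
  define d where "d = n * kk"
  define S where "S = (\<Sum>u\<in>{a<..a+d}. 1 / mu M u)"
  define C' where "C' = max 1 C"
  have nj0: "real (n * j) > 0" using n1 j1 by simp
  have L0: "L > 0" unfolding L_def by (rule lam_pos[OF ws nq n1 j1])
  have T0: "T > 0" unfolding T_def by (rule Tl_pos[OF ws nq])
  have nz: "real n * real j \<noteq> 0" using n1 j1 by simp
  have TL: "T = L * real (n * j)" unfolding L_def lam_def T_def using nz by simp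
  have d0: "d > 0" unfolding d_def using n1 kk1 by simp
  have anj: "Suc a = n * j" unfolding a_def using n1 j1 by simp
  have e1: "n * j - n * (j - 1) = n" using j1 by (simp add: diff_mult_distrib2)
  have "N (n*j) * T ^ n \<le> s ^ (n*j) * M (n*(j-1)) * (C * real (n*j)) ^ n"
    using SV[of "n*j" "n*(j-1)"] n1 j1 e1 unfolding T_def by simp
  then have "N (n*j) * L ^ n * real (n*j) ^ n \<le> s ^ (n*j) * M (n*(j-1)) * C ^ n * real (n*j) ^ n"
    unfolding TL by (simp add: power_mult_distrib mult_ac)
  then have sv: "N (n*j) * L ^ n \<le> s ^ (n*j) * M (n*(j-1)) * C ^ n"
    using nj0 by (simp add: mult_le_cancel_right)
  have mupos: "\<And>u. mu M u > 0" by (rule ws_mu_pos[OF ws])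
  have S0: "S > 0" unfolding S_def using d0 mupos by (intro sum_pos) auto
  have ST: "S \<le> T" unfolding S_def T_def using Tl_block[OF ws nq, of a d] anj by simp
  have am: "(\<Prod>u\<in>{a<..a+d}. 1 / mu M u) \<le> (S / real d) ^ d"
    unfolding S_def by (rule amgm) (use d0 mupos in auto)
  have pr: "(\<Prod>u\<in>{a<..a+d}. 1 / mu M u) = M a / M (a + d)"
  proof -
    have "(\<Prod>u\<in>{a<..a+d}. 1 / mu M u) = 1 / (\<Prod>u\<in>{a<..a+d}. mu M u)"
      by (simp add: prod_dividef)
    also have "\<dots> = M a / M (a + d)"
      by (subst ws_M_ratio[OF ws, of a d, symmetric]) simp
    finally show ?thesis .
  qed
  have dS: "(real d / S) ^ d \<le> M (a + d) / M a"
  proof -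
    have "M a / M (a + d) \<le> (S / real d) ^ d" using am pr by simp
    then have "M a \<le> (S / real d) ^ d * M (a + d)" using ws_pos[OF ws, of "a+d"] by (simp add: divide_le_eq)
    then have "1 / (S / real d) ^ d \<le> M (a + d) / M a"
      using ws_pos[OF ws, of a] ws_pos[OF ws, of "a+d"] S0 d0 by (simp add: field_simps)
    then show ?thesis by (simp add: power_divide)
  qed
  have r1: "(1 / L) ^ d \<le> (real (n*j) / S) ^ d"
  proof -
    have "1 / L = real (n*j) / T" unfolding TL using L0 nz by simp
    also have "\<dots> \<le> real (n*j) / S" using S0 ST nj0 by (intro divide_left_mono) auto
    finally show ?thesis using L0 by (intro power_mono) auto
  qed
  have r2: "(real (n*j) / S) ^ d = (real j / real kk) ^ d * (real d / S) ^ d"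
  proof -
    have eq: "real (n*j) / S = (real j / real kk) * (real d / S)" using kk1 by (simp add: d_def field_simps)
    show ?thesis unfolding eq by (rule power_mult_distrib)
  qed
  have r3: "(real j / real kk) ^ d \<le> exp 1 ^ (n*j)"
  proof -
    have "(real j / real kk) ^ d = ((real j / real kk) ^ kk) ^ n" by (simp add: d_def power_mult[symmetric] mult.commute)
    also have "\<dots> \<le> (exp (real j)) ^ n" using kk1 by (intro power_mono ratio_pow_le_exp) auto
    also have "\<dots> = exp 1 ^ (n*j)" by (simp add: exp_of_nat_mult[symmetric] power_mult[symmetric] mult.commute)
    finally show ?thesis .
  qed
  have inv: "(1 / L) ^ d \<le> exp 1 ^ (n*j) * (M (a + d) / M a)"
  proof -
    have "(1 / L) ^ d \<le> (real j / real kk) ^ d * (real d / S) ^ d" using r1 r2 by simp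
    also have "\<dots> \<le> exp 1 ^ (n*j) * (M (a + d) / M a)"
      using r3 dS S0 by (intro mult_mono) auto
    finally show ?thesis .
  qed
  have Ma: "M (n*(j-1)) \<le> M a" unfolding a_def using j1 n1 by (intro ws_M_mono[OF ws]) (simp add: diff_mult_distrib2)
  have Cn: "C ^ n \<le> C' ^ (n*j)" unfolding C'_def by (rule Cpow_le[OF _ C0]) (use j1 in simp)
  have "N (n*j) * L ^ n / L ^ d = N (n*j) * L ^ n * (1 / L) ^ d" by (simp add: power_one_over)
  also have "\<dots> \<le> (s ^ (n*j) * M (n*(j-1)) * C ^ n) * (exp 1 ^ (n*j) * (M (a + d) / M a))"
    by (rule mult_mono[OF sv inv]) (use ws_pos[OF ws, of "n*(j-1)"] s1 C0 L0 in auto)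
  also have "\<dots> \<le> (s ^ (n*j) * M a * C' ^ (n*j)) * (exp 1 ^ (n*j) * (M (a + d) / M a))"
    using Ma Cn s1 ws_pos[OF ws] C0 by (intro mult_right_mono mult_mono) (auto intro!: divide_nonneg_nonneg less_imp_le)
  also have "\<dots> = (s * exp 1 * C') ^ (n*j) * M (a + d)"
    using ws_pos[OF ws, of a] by (simp add: power_mult_distrib field_simps)
  moreover have "a + d = n*j + n*kk - 1" unfolding a_def d_def using n1 j1 by simp
  ultimately show ?thesis unfolding L_def d_def C'_def by simp
qed


lemma pow_le_base:
  fixes a b :: real
  assumes "n \<ge> 1" "a ^ n \<le> b ^ n" "0 \<le> b"
  shows "a \<le> b"
proof -
  obtain n' where "n = Suc n'" using assms(1) by (cases n) auto
  then show ?thesis using power_le_imp_le_base[of a n' b] assms by simp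
qed

lemma key_est:
  fixes M N :: "nat \<Rightarrow> real" and s C :: real
  assumes ws: "weight_seq M" and nq: "nonquasianalytic M" and n1: "n \<ge> 1" and j1: "j \<ge> 1"
    and s1: "s \<ge> 1" and C0: "C > 0" and Npos: "\<And>k. N k > 0"
    and SV: "\<And>j i. j \<ge> 1 \<Longrightarrow> i < j \<Longrightarrow> N j * Tl M j ^ (j - i) \<le> s ^ j * M i * (C * real j) ^ (j - i)"
    and mk: "m \<le> k" "k \<le> j + m" "r \<le> m"
  shows "N (n*j) powr (1/n) * lam M n j ^ (j + m - k) / lam M n j ^ r * (\<Prod>t\<in>{r..<m}. mu M (n*(t+1)))
         \<le> (s * exp 1 * max 1 C) ^ j * M (n*(k+1)) powr (1/n)"
proof -
  define q where "q = j + m - k"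
  define i where "i = k - m + r"
  define L where "L = lam M n j"
  define P where "P = (\<Prod>t\<in>{r..<m}. mu M (n*(t+1)))"
  define W where "W = s * exp 1 * max 1 C"
  define b where "b = N (n*j) powr (1/n)"
  define Mk where "Mk = M (n*(k+1))"
  have L0: "L > 0" unfolding L_def by (rule lam_pos[OF ws nq n1 j1])
  have P0: "P > 0" unfolding P_def using ws_mu_pos[OF ws] by (intro prod_pos) auto
  have b0: "b > 0" unfolding b_def using Npos[of "n*j"] by simp
  have W1: "W \<ge> 1"
  proof -
    have ee: "exp (1::real) \<ge> 1" by simp
    have "1 * 1 \<le> s * exp 1" by (rule mult_mono) (use s1 ee in auto)
    then have "1 \<le> s * exp 1" by simp
    moreover have "1 \<le> max 1 C" by simp
    ultimately show ?thesis unfolding W_def using mult_mono[of 1 "s * exp 1" 1 "max 1 C"] by simp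
  qed
  have Mk0: "Mk > 0" unfolding Mk_def by (rule ws_pos[OF ws])
  have bn: "b ^ n = N (n*j)" unfolding b_def by (rule powr_inv_pow) (use Npos n1 in auto)
  have Mkn: "(Mk powr (1/n)) ^ n = Mk" by (rule powr_inv_pow) (use Mk0 n1 in auto)
  have ir: "i \<ge> r" unfolding i_def using mk by simp
  have PQ: "P ^ n \<le> Mk / M (n*(i+1))"
  proof -
    have "P ^ n \<le> M (n*(i+1) + n * (m - r)) / M (n*(i+1))" unfolding P_def
      by (rule QM[OF ws n1 mk(3)]) (use ir in simp)
    moreover have "n*(i+1) + n * (m - r) = n*(k+1)"
    proof -
      have "i + 1 + (m - r) = k + 1" unfolding i_def using mk by arith
      then show ?thesis by (metis add_mult_distrib2)
    qed
    ultimately show ?thesis unfolding Mk_def by metis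
  qed
  have e1: "1 \<le> exp (1::real) ^ (n*j)" by (rule one_le_power) simp
  have X: "N (n*j) * L ^ (n*q) / L ^ (n*r) \<le> W ^ (n*j) * M (n*(i+1))"
  proof (cases "r < q")
    case True
    have ij: "i < j" unfolding i_def using True mk by (simp add: q_def)
    have qr: "n*q - n*r = n*(j-i)"
    proof -
      have "q - r = j - i" unfolding i_def q_def using True mk by arith
      then show ?thesis by (metis diff_mult_distrib2)
    qed
    have h: "L ^ (n*q) / L ^ (n*r) = L ^ (n*(j-i))"
      using power_diff[of L "n*r" "n*q"] L0 True qr by simp
    have "N (n*j) * L ^ (n*q) / L ^ (n*r) = N (n*j) * L ^ (n*(j-i))"
      by (subst times_divide_eq_right[symmetric]) (subst h, rule refl)
    also have "\<dots> \<le> s ^ (n*j) * max 1 C ^ (n*j) * M (n*i)"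
      unfolding L_def by (rule caseA[OF ws nq n1 s1 C0 Npos SV ij])
    also have "\<dots> \<le> s ^ (n*j) * max 1 C ^ (n*j) * M (n*(i+1))"
      using s1 by (intro mult_left_mono ws_M_mono[OF ws]) auto
    also have "\<dots> \<le> W ^ (n*j) * M (n*(i+1))"
    proof -
      have "s ^ (n*j) * max 1 C ^ (n*j) = (s ^ (n*j) * max 1 C ^ (n*j)) * 1" by simp
      also have "\<dots> \<le> (s ^ (n*j) * max 1 C ^ (n*j)) * exp 1 ^ (n*j)"
        by (rule mult_left_mono[OF e1]) (use s1 in simp)
      also have "\<dots> = W ^ (n*j)" unfolding W_def power_mult_distrib by (simp only: mult_ac)
      finally have "s ^ (n*j) * max 1 C ^ (n*j) \<le> W ^ (n*j)" .
      then show ?thesis using ws_pos[OF ws, of "n*(i+1)"] by (intro mult_right_mono) auto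
    qed
    finally show ?thesis .
  next
    case False
    define kk where "kk = r - q + 1"
    have kk1: "kk \<ge> 1" by (simp add: kk_def)
    have kk_eq: "kk + q = r + 1" unfolding kk_def using False by simp
    have q_eq: "q + k = j + m" unfolding q_def using mk by simp
    have i_eq: "i + m = k + r" unfolding i_def using mk by simp
    have ex: "n*r + n = n*q + n*kk"
    proof -
      have "r + 1 = q + kk" using kk_eq by linarith
      then have "n*(r + 1) = n*(q + kk)" by simp
      then show ?thesis by (simp add: add_mult_distrib2)
    qed
    have "L ^ (n*q) * L ^ (n*kk) = L ^ (n*r) * L ^ n" using ex by (simp add: power_add[symmetric])
    then have eq: "L ^ (n*q) / L ^ (n*r) = L ^ n / L ^ (n*kk)" using L0 by (simp add: field_simps)
    have "N (n*j) * L ^ (n*q) / L ^ (n*r) = N (n*j) * L ^ n / L ^ (n*kk)"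
      by (subst (1 2) times_divide_eq_right[symmetric]) (subst eq, rule refl)
    also have "\<dots> \<le> W ^ (n*j) * M (n*j + n*kk - 1)"
      unfolding L_def W_def by (rule caseB[OF ws nq n1 s1 C0 Npos SV j1 kk1])
    also have "\<dots> \<le> W ^ (n*j) * M (n*(i+1))"
    proof -
      have "j + kk = i + 1" using kk_eq q_eq i_eq by linarith
      then have "n*j + n*kk = n*(i+1)" by (metis add_mult_distrib2)
      then have "n*j + n*kk - 1 \<le> n*(i+1)" by simp
      then show ?thesis using W1 by (intro mult_left_mono ws_M_mono[OF ws]) auto
    qed
    finally show ?thesis .
  qed
  have pq: "(L ^ q) ^ n = L ^ (n*q)" by (simp only: power_mult[symmetric] mult.commute)
  have pr: "(L ^ r) ^ n = L ^ (n*r)" by (simp only: power_mult[symmetric] mult.commute)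
  have "(b * L ^ q / L ^ r * P) ^ n = b ^ n * (L ^ q) ^ n / (L ^ r) ^ n * P ^ n"
    by (simp only: power_mult_distrib power_divide)
  also have "\<dots> = N (n*j) * L ^ (n*q) / L ^ (n*r) * P ^ n" by (simp only: bn pq pr)
  also have "\<dots> \<le> (W ^ (n*j) * M (n*(i+1))) * (Mk / M (n*(i+1)))"
  proof (rule mult_mono[OF X PQ])
    have "0 < M (n*(i+1))" by (rule ws_pos[OF ws])
    moreover have "0 \<le> W ^ (n*j)" using W1 by simp
    ultimately show "0 \<le> W ^ (n*j) * M (n*(i+1))" by simp
    show "0 \<le> P ^ n" using P0 by simp
  qed
  also have "\<dots> = W ^ (n*j) * Mk"
    using ws_pos[OF ws, of "n*(i+1)"] by simp
  also have "\<dots> = (W ^ j * Mk powr (1/n)) ^ n"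
  proof -
    have "(W ^ j) ^ n = W ^ (n*j)" by (simp only: power_mult[symmetric] mult.commute)
    then show ?thesis by (simp only: power_mult_distrib Mkn)
  qed
  finally have "(b * L ^ q / L ^ r * P) ^ n \<le> (W ^ j * Mk powr (1/n)) ^ n" .
  then have "b * L ^ q / L ^ r * P \<le> W ^ j * Mk powr (1/n)"
    by (rule pow_le_base[OF n1]) (use W1 in simp)
  then show ?thesis unfolding b_def L_def q_def P_def W_def Mk_def .
qed


definition Gf :: "(nat \<Rightarrow> real) \<Rightarrow> nat \<Rightarrow> nat \<Rightarrow> nat \<Rightarrow> real \<Rightarrow> real" where
  "Gf M n j k x = (\<Sum>m\<le>k. real (k choose m) * PA j (k - m) x * chiD m (lens M n j) x)"

lemma Gf_deriv:
  assumes "weight_seq M" "nonquasianalytic M" "n \<ge> 1"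
  shows "(Gf M n j k has_real_derivative Gf M n j (Suc k) x) (at x)"
proof -
  have g: "good (lens M n j)" by (rule lens_good[OF assms])
  have e: "Gf M n j k = (\<lambda>x. \<Sum>m\<le>k. real (k choose m) * PA j (k - m) x * (\<lambda>m. chiD m (lens M n j)) m x)"
    by (simp add: fun_eq_iff Gf_def)
  show ?thesis unfolding e
    using leibniz_deriv[of "PA j" "\<lambda>m. chiD m (lens M n j)" k x] PA_deriv chiD_deriv[OF g]
    by (simp add: Gf_def)
qed

lemma Gf_at0:
  assumes "weight_seq M" "nonquasianalytic M" "n \<ge> 1"
  shows "Gf M n j k 0 = (if j = k then 1 else 0)"
proof -
  have g: "good (lens M n j)" by (rule lens_good[OF assms])
  have "Gf M n j k 0 = (\<Sum>m\<le>k. (if m = 0 then (if j = k then 1 else 0) else 0))"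
    unfolding Gf_def by (intro sum.cong refl) (auto simp: PA_at0 chiD_at0[OF g])
  also have "\<dots> = (if j = k then 1 else 0)" by (simp add: sum.delta)
  finally show ?thesis .
qed

lemma PA_abs_le:
  "\<bar>x\<bar> \<le> R \<Longrightarrow> k - m \<le> j \<Longrightarrow> \<bar>PA j (k - m) x\<bar> \<le> R ^ (j - (k - m)) / fact (j - (k - m))"
  by (simp add: PA_def abs_mult power_abs divide_right_mono power_mono)

lemma term_bound_pos:
  fixes M N :: "nat \<Rightarrow> real" and s C :: real
  assumes ws: "weight_seq M" and nq: "nonquasianalytic M" and n1: "n \<ge> 1" and j1: "j \<ge> 1"
    and s1: "s \<ge> 1" and C0: "C > 0" and Npos: "\<And>k. N k > 0"
    and SV: "\<And>j i. j \<ge> 1 \<Longrightarrow> i < j \<Longrightarrow> N j * Tl M j ^ (j - i) \<le> s ^ j * M i * (C * real j) ^ (j - i)"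
    and mk: "m \<le> k"
  shows "N (n*j) powr (1/n) * (\<bar>PA j (k - m) x\<bar> * \<bar>chiD m (lens M n j) x\<bar>)
         \<le> 2 * 2 ^ k * (3 * exp 1 * (s * exp 1 * max 1 C)) ^ j * M (n*(k+1)) powr (1/n)"
proof -
  define l where "l = lens M n j"
  define L where "L = lam M n j"
  define b where "b = N (n*j) powr (1/n)"
  define W0 where "W0 = s * exp 1 * max 1 C"
  define Mn where "Mn = M (n*(k+1)) powr (1/n)"
  have g: "good l" unfolding l_def by (rule lens_good[OF ws nq n1])
  have L0: "L > 0" unfolding L_def by (rule lam_pos[OF ws nq n1 j1])
  have b0: "b > 0" unfolding b_def using Npos[of "n*j"] by simp
  have Mn0: "Mn > 0" unfolding Mn_def using ws_pos[OF ws, of "n*(k+1)"] by simp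
  have W00: "W0 > 0" unfolding W0_def using s1 by simp
  have RHS0: "0 \<le> 2 * 2 ^ k * (3 * exp 1 * W0) ^ j * Mn" using W00 Mn0 by simp
  show ?thesis
  proof (cases "\<bar>x\<bar> > 3 / 2 * suminf l \<or> k - m > j")
    case True
    then have "\<bar>PA j (k - m) x\<bar> * \<bar>chiD m (lens M n j) x\<bar> = 0"
      using chiD_support[OF g, of x m] by (auto simp: l_def PA_def)
    then have "N (n*j) powr (1/n) * (\<bar>PA j (k - m) x\<bar> * \<bar>chiD m (lens M n j) x\<bar>) = 0" by simp
    then show ?thesis using RHS0 unfolding W0_def Mn_def by linarith
  next
    case False
    then have xw: "\<bar>x\<bar> \<le> 3 / 2 * suminf l" and kmj: "k - m \<le> j" by auto
    define q where "q = j - (k - m)"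
    have q_eq: "q = j + m - k" unfolding q_def using mk kmj by simp
    have qj: "q \<le> j" unfolding q_def by simp
    have wl: "suminf l \<le> 2 * real j * L" unfolding l_def L_def by (rule lens_sum[OF ws nq n1 j1])
    have xR: "\<bar>x\<bar> \<le> 3 * real j * L" using xw wl by linarith
    have PAb: "\<bar>PA j (k - m) x\<bar> \<le> 3 ^ j * exp 1 ^ j * L ^ q"
    proof -
      have "\<bar>PA j (k - m) x\<bar> \<le> (3 * real j * L) ^ q / fact q"
        unfolding q_def by (rule PA_abs_le[OF xR kmj])
      also have "\<dots> = 3 ^ q * L ^ q * (real j ^ q / fact q)" by (simp add: power_mult_distrib)
      also have "\<dots> \<le> 3 ^ j * L ^ q * exp (real j)"
      proof (rule mult_mono)
        show "3 ^ q * L ^ q \<le> 3 ^ j * L ^ q" using qj L0 by (intro mult_right_mono power_increasing) auto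
        show "real j ^ q / fact q \<le> exp (real j)" by (rule pow_fact_le_exp) simp
      qed (use L0 in auto)
      also have "\<dots> = 3 ^ j * exp 1 ^ j * L ^ q" by (simp add: exp_of_nat_mult[symmetric] mult_ac)
      finally show ?thesis .
    qed
    obtain r where r: "r \<le> m" "(\<Prod>i<m. 1 / l i) \<le> (1 / L) ^ r * (\<Prod>t\<in>{r..<m}. mu M (n * (t + 1)))"
      using lens_prod[OF ws nq n1 j1, of m] unfolding l_def L_def by blast
    define P where "P = (\<Prod>t\<in>{r..<m}. mu M (n * (t + 1)))"
    have lpos: "\<And>i. l i > 0" using g by (simp add: good_def)
    have chib: "\<bar>chiD m l x\<bar> \<le> 2 * 2 ^ m * ((1 / L) ^ r * P)"
    proof -
      have "\<bar>chiD m l x\<bar> \<le> 2 * 2 ^ m / (\<Prod>i<m. l i)" by (rule chiD_bound[OF g])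
      also have "\<dots> = 2 * 2 ^ m * (\<Prod>i<m. 1 / l i)" by (simp add: prod_dividef)
      also have "\<dots> \<le> 2 * 2 ^ m * ((1 / L) ^ r * P)" using r(2) unfolding P_def by simp
      finally show ?thesis .
    qed
    have kjm: "k \<le> j + m" using kmj by arith
    have key: "b * L ^ q / L ^ r * P \<le> W0 ^ j * Mn"
      unfolding b_def L_def P_def W0_def Mn_def q_eq
      by (rule key_est[OF ws nq n1 j1 s1 C0 Npos SV mk kjm r(1)])
    have "b * (\<bar>PA j (k - m) x\<bar> * \<bar>chiD m l x\<bar>) \<le> b * ((3 ^ j * exp 1 ^ j * L ^ q) * (2 * 2 ^ m * ((1 / L) ^ r * P)))"
      using PAb chib b0 by (intro mult_left_mono mult_mono) auto
    also have "\<dots> = 2 * 2 ^ m * (3 * exp 1) ^ j * (b * L ^ q / L ^ r * P)"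
      by (simp add: power_one_over power_mult_distrib field_simps)
    also have "\<dots> \<le> 2 * 2 ^ m * (3 * exp 1) ^ j * (W0 ^ j * Mn)"
      using key by (intro mult_left_mono) auto
    also have "\<dots> \<le> 2 * 2 ^ k * (3 * exp 1) ^ j * (W0 ^ j * Mn)"
      using mk W00 Mn0 by (intro mult_right_mono mult_left_mono power_increasing) auto
    also have "\<dots> = 2 * 2 ^ k * (3 * exp 1 * W0) ^ j * Mn" by (simp add: power_mult_distrib)
    finally show ?thesis unfolding b_def l_def W0_def Mn_def .
  qed
qed


lemma term_bound_zero:
  assumes ws: "weight_seq M" and nq: "nonquasianalytic M" and n1: "n \<ge> 1" and mk: "m \<le> k"
  shows "\<bar>PA 0 (k - m) x\<bar> * \<bar>chiD m (lens M n 0) x\<bar> \<le> 2 * 2 ^ k * M (n*(k+1)) powr (1/n)"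
proof -
  define l where "l = lens M n 0"
  define P where "P = (\<Prod>t\<in>{0..<m}. mu M (n * (t + 1)))"
  have g: "good l" unfolding l_def by (rule lens_good[OF ws nq n1])
  have PA1: "\<bar>PA 0 (k - m) x\<bar> \<le> 1" by (simp add: PA_def)
  have P0: "P > 0" unfolding P_def using ws_mu_pos[OF ws] by (intro prod_pos) auto
  have chib: "\<bar>chiD m l x\<bar> \<le> 2 * 2 ^ m * P"
  proof -
    have "\<bar>chiD m l x\<bar> \<le> 2 * 2 ^ m / (\<Prod>i<m. l i)" by (rule chiD_bound[OF g])
    also have "\<dots> = 2 * 2 ^ m * (\<Prod>i<m. 1 / l i)" by (simp add: prod_dividef)
    also have "\<dots> = 2 * 2 ^ m * P" unfolding P_def l_def lens0_prod ..
    finally show ?thesis .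
  qed
  have Pn: "P ^ n \<le> M (n*(k+1))"
  proof -
    have "P ^ n \<le> M (n + n * (m - 0)) / M n" unfolding P_def by (rule QM[OF ws n1]) auto
    also have "\<dots> \<le> M (n + n * m)" using ws_M_ge1[OF ws, of n] ws_pos[OF ws, of "n + n*m"]
      by (simp add: divide_le_eq mult_le_cancel_left1 less_imp_le)
    also have "\<dots> \<le> M (n*(k+1))" using mk by (intro ws_M_mono[OF ws]) simp
    finally show ?thesis .
  qed
  have PM: "P \<le> M (n*(k+1)) powr (1/n)"
  proof (rule pow_le_base[OF n1])
    show "P ^ n \<le> (M (n*(k+1)) powr (1/n)) ^ n"
      using Pn powr_inv_pow[of "M (n*(k+1))" n] ws_pos[OF ws] n1 by simp
  qed simp
  have "\<bar>PA 0 (k - m) x\<bar> * \<bar>chiD m l x\<bar> \<le> 1 * (2 * 2 ^ m * P)"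
    by (rule mult_mono[OF PA1 chib]) auto
  also have "\<dots> \<le> 2 * 2 ^ k * M (n*(k+1)) powr (1/n)"
    using PM mk P0 by (simp add: mult_mono power_increasing)
  finally show ?thesis unfolding l_def .
qed

lemma Gf_bound:
  fixes M N :: "nat \<Rightarrow> real" and s C :: real
  assumes ws: "weight_seq M" and nq: "nonquasianalytic M" and n1: "n \<ge> 1"
    and s1: "s \<ge> 1" and C0: "C > 0" and Npos: "\<And>k. N k > 0"
    and SV: "\<And>j i. j \<ge> 1 \<Longrightarrow> i < j \<Longrightarrow> N j * Tl M j ^ (j - i) \<le> s ^ j * M i * (C * real j) ^ (j - i)"
  shows "N (n*j) powr (1/n) * \<bar>Gf M n j k x\<bar>
    \<le> 2 * max 1 (N 0 powr (1/n)) * 4 ^ k * (3 * exp 1 * (s * exp 1 * max 1 C)) ^ j * M (n*(k+1)) powr (1/n)"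
proof -
  define b where "b = N (n*j) powr (1/n)"
  define W where "W = 3 * exp 1 * (s * exp 1 * max 1 C)"
  define Mn where "Mn = M (n*(k+1)) powr (1/n)"
  define K1 where "K1 = max 1 (N 0 powr (1/n))"
  define T where "T = K1 * (2 * 2 ^ k * W ^ j * Mn)"
  have b0: "b > 0" unfolding b_def using Npos[of "n*j"] by simp
  have W1: "W \<ge> 1"
  proof -
    have ee: "exp (1::real) \<ge> 1" by simp
    have "1 * 1 \<le> s * exp 1" by (rule mult_mono) (use s1 ee in auto)
    then have a: "1 \<le> s * exp 1 * max 1 C" using mult_mono[of 1 "s * exp 1" 1 "max 1 C"] by simp
    have "1 * 1 \<le> (3::real) * exp 1" by (rule mult_mono) (use ee in auto)
    then have b: "1 \<le> (3::real) * exp 1" by simp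
    have "1 * 1 \<le> (3 * exp 1) * (s * exp 1 * max 1 C)" by (rule mult_mono) (use a b in auto)
    then show ?thesis unfolding W_def by (simp add: mult.assoc)
  qed
  have Mn0: "Mn > 0" unfolding Mn_def using ws_pos[OF ws, of "n*(k+1)"] by simp
  have K1: "K1 \<ge> 1" unfolding K1_def by simp
  have tb: "b * (\<bar>PA j (k - m) x\<bar> * \<bar>chiD m (lens M n j) x\<bar>) \<le> T" if mk: "m \<le> k" for m
  proof (cases "j = 0")
    case True
    have "b * (\<bar>PA j (k - m) x\<bar> * \<bar>chiD m (lens M n j) x\<bar>) \<le> K1 * (2 * 2 ^ k * Mn)"
    proof (rule mult_mono)
      show "b \<le> K1" unfolding b_def K1_def True by simp
      show "\<bar>PA j (k - m) x\<bar> * \<bar>chiD m (lens M n j) x\<bar> \<le> 2 * 2 ^ k * Mn"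
        unfolding True Mn_def by (rule term_bound_zero[OF ws nq n1 mk])
    qed (use K1 in auto)
    then show ?thesis unfolding T_def True by simp
  next
    case False
    then have j1: "j \<ge> 1" by simp
    have "b * (\<bar>PA j (k - m) x\<bar> * \<bar>chiD m (lens M n j) x\<bar>) \<le> 2 * 2 ^ k * W ^ j * Mn"
      unfolding b_def W_def Mn_def by (rule term_bound_pos[OF ws nq n1 j1 s1 C0 Npos SV mk])
    also have "\<dots> \<le> T"
    proof -
      have z: "0 \<le> 2 * 2 ^ k * W ^ j * Mn" using W1 Mn0 by simp
      have "1 * (2 * 2 ^ k * W ^ j * Mn) \<le> K1 * (2 * 2 ^ k * W ^ j * Mn)"
        by (rule mult_right_mono[OF K1 z])
      then show ?thesis unfolding T_def by simp
    qed
    finally show ?thesis .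
  qed
  have "b * \<bar>Gf M n j k x\<bar> \<le> b * (\<Sum>m\<le>k. real (k choose m) * (\<bar>PA j (k - m) x\<bar> * \<bar>chiD m (lens M n j) x\<bar>))"
  proof (rule mult_left_mono)
    show "\<bar>Gf M n j k x\<bar> \<le> (\<Sum>m\<le>k. real (k choose m) * (\<bar>PA j (k - m) x\<bar> * \<bar>chiD m (lens M n j) x\<bar>))"
      unfolding Gf_def by (rule order_trans[OF sum_abs]) (simp add: abs_mult mult.assoc)
  qed (use b0 in simp)
  also have "\<dots> = (\<Sum>m\<le>k. real (k choose m) * (b * (\<bar>PA j (k - m) x\<bar> * \<bar>chiD m (lens M n j) x\<bar>)))"
    by (simp add: sum_distrib_left mult_ac)
  also have "\<dots> \<le> (\<Sum>m\<le>k. real (k choose m) * T)"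
    by (rule sum_mono) (use tb in \<open>auto intro: mult_left_mono\<close>)
  also have "\<dots> = 2 ^ k * T" by (simp add: sum_distrib_right[symmetric] choose_row_sum[of k, THEN arg_cong[where f=real], simplified])
  also have "\<dots> = 2 * K1 * 4 ^ k * W ^ j * Mn"
  proof -
    have "(2::real) ^ k * 2 ^ k = 4 ^ k" by (simp add: power_mult_distrib[symmetric])
    then show ?thesis unfolding T_def by (simp add: mult_ac)
  qed
  finally show ?thesis unfolding b_def K1_def W_def Mn_def .
qed


lemma wm_ws: "weight_matrix Mat \<Longrightarrow> \<alpha> > 0 \<Longrightarrow> weight_seq (Mat \<alpha>)"
  by (simp add: weight_matrix_def)

lemma wm_mono: "weight_matrix Mat \<Longrightarrow> 0 < \<alpha> \<Longrightarrow> \<alpha> \<le> \<beta> \<Longrightarrow> Mat \<alpha> k \<le> Mat \<beta> k"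
  by (simp add: weight_matrix_def)

lemma MG_iter:
  assumes wm: "weight_matrix Mat" and rm: "R_moderate_growth Mat"
  shows "\<forall>\<alpha>>0. \<exists>\<gamma>>0. \<exists>D\<ge>1. \<forall>k. Mat \<alpha> (Suc n * k) \<le> D ^ (Suc n * k) * (Mat \<gamma> k) ^ Suc n"
proof (induction n)
  case 0
  show ?case
  proof (intro allI impI)
    fix \<alpha> :: real assume "\<alpha> > 0"
    then show "\<exists>\<gamma>>0. \<exists>D\<ge>1. \<forall>k. Mat \<alpha> (Suc 0 * k) \<le> D ^ (Suc 0 * k) * (Mat \<gamma> k) ^ Suc 0"
      by (intro exI[of _ \<alpha>] exI[of _ 1]) auto
  qed
next
  case (Suc n)
  show ?case
  proof (intro allI impI)
  fix \<alpha> :: real assume a0: "\<alpha> > 0"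
  obtain \<beta> C where b: "\<beta> > 0" "C \<ge> 1" and mg: "\<And>j k. Mat \<alpha> (j + k) \<le> C ^ (j + k) * Mat \<beta> j * Mat \<beta> k"
    using rm a0 unfolding R_moderate_growth_def by blast
  obtain \<gamma> D where g: "\<gamma> > 0" "D \<ge> 1" and ih: "\<And>k. Mat \<beta> (Suc n * k) \<le> D ^ (Suc n * k) * (Mat \<gamma> k) ^ Suc n"
    using Suc.IH b(1) by blast
  define \<gamma>' where "\<gamma>' = max \<beta> \<gamma>"
  have g': "\<gamma>' > 0" unfolding \<gamma>'_def using b by simp
  have pos: "\<And>a k. a > 0 \<Longrightarrow> Mat a k > 0" using ws_pos wm_ws[OF wm] by blast
  have CD: "C * D \<ge> 1" using b g mult_mono[of 1 C 1 D] by simp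
  have main: "\<forall>k. Mat \<alpha> (Suc (Suc n) * k) \<le> (C * D) ^ (Suc (Suc n) * k) * Mat \<gamma>' k ^ Suc (Suc n)"
  proof
    fix k
    have m1: "Mat \<beta> k \<le> Mat \<gamma>' k" unfolding \<gamma>'_def by (rule wm_mono[OF wm b(1)]) simp
    have m2: "Mat \<gamma> k \<le> Mat \<gamma>' k" unfolding \<gamma>'_def by (rule wm_mono[OF wm g(1)]) simp
    have "Mat \<alpha> (Suc (Suc n) * k) = Mat \<alpha> (Suc n * k + k)" by (simp add: algebra_simps)
    also have "\<dots> \<le> C ^ (Suc n * k + k) * Mat \<beta> (Suc n * k) * Mat \<beta> k" by (rule mg)
    also have "\<dots> \<le> C ^ (Suc n * k + k) * (D ^ (Suc n * k) * (Mat \<gamma> k) ^ Suc n) * Mat \<gamma>' k"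
      using ih[of k] m1 b pos[OF b(1)] pos[OF g(1)] g
      by (intro mult_mono mult_left_mono) (auto intro: less_imp_le)
    also have "\<dots> \<le> C ^ (Suc n * k + k) * (D ^ (Suc (Suc n) * k) * (Mat \<gamma>' k) ^ Suc n) * Mat \<gamma>' k"
    proof -
      have "D ^ (Suc n * k) \<le> D ^ (Suc (Suc n) * k)" using g by (intro power_increasing) auto
      moreover have "(Mat \<gamma> k) ^ Suc n \<le> (Mat \<gamma>' k) ^ Suc n"
        using m2 pos[OF g(1)] by (intro power_mono) (auto intro: less_imp_le)
      ultimately have "D ^ (Suc n * k) * (Mat \<gamma> k) ^ Suc n \<le> D ^ (Suc (Suc n) * k) * (Mat \<gamma>' k) ^ Suc n"
        using g pos[OF g(1)] by (intro mult_mono) (auto intro: less_imp_le)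
      then show ?thesis using b pos[OF g'] by (intro mult_right_mono mult_left_mono) (auto intro: less_imp_le)
    qed
    also have "\<dots> = (C * D) ^ (Suc (Suc n) * k) * (Mat \<gamma>' k) ^ Suc (Suc n)"
      by (simp add: power_mult_distrib algebra_simps)
    finally show "Mat \<alpha> (Suc (Suc n) * k) \<le> (C * D) ^ (Suc (Suc n) * k) * Mat \<gamma>' k ^ Suc (Suc n)" .
  qed
  show "\<exists>\<gamma>>0. \<exists>D\<ge>1. \<forall>k. Mat \<alpha> (Suc (Suc n) * k) \<le> D ^ (Suc (Suc n) * k) * (Mat \<gamma> k) ^ Suc (Suc n)"
    using g' CD main by blast
  qed
qed

lemma Mn_bound:
  assumes wm: "weight_matrix Mat" and rm: "R_moderate_growth Mat" and b0: "\<beta>0 > 0" and n1: "n \<ge> 1"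
  shows "\<exists>\<gamma>>0. \<exists>A>0. \<exists>B>0. \<forall>k. Mat \<beta>0 (n*(k+1)) powr (1/n) \<le> A * B ^ k * Mat \<gamma> k"
proof -
  obtain n' where nn: "n = Suc n'" using n1 by (cases n) auto
  have pos: "\<And>a k. a > 0 \<Longrightarrow> Mat a k > 0" using ws_pos wm_ws[OF wm] by blast
  obtain \<gamma> D where g: "\<gamma> > 0" "D \<ge> 1" and mg: "\<And>k. Mat \<beta>0 (n * k) \<le> D ^ (n * k) * (Mat \<gamma> k) ^ n"
    using MG_iter[OF wm rm, of n'] b0 unfolding nn by blast
  obtain \<gamma>1 C1 where g1: "\<gamma>1 > 0" "C1 \<ge> 1" and mg1: "\<And>j k. Mat \<gamma> (j + k) \<le> C1 ^ (j + k) * Mat \<gamma>1 j * Mat \<gamma>1 k"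
    using rm g(1) unfolding R_moderate_growth_def by blast
  have st: "Mat \<beta>0 (n*(k+1)) powr (1/n) \<le> D ^ (k+1) * Mat \<gamma> (k+1)" for k
  proof (rule pow_le_base[OF n1])
    have "(Mat \<beta>0 (n*(k+1)) powr (1/n)) ^ n = Mat \<beta>0 (n*(k+1))"
      by (rule powr_inv_pow) (use pos[OF b0] n1 in auto)
    also have "\<dots> \<le> D ^ (n * (k+1)) * (Mat \<gamma> (k+1)) ^ n" by (rule mg)
    also have "\<dots> = (D ^ (k+1) * Mat \<gamma> (k+1)) ^ n"
    proof -
      have "(D ^ (k+1)) ^ n = D ^ (n * (k+1))" by (simp only: power_mult[symmetric] mult.commute)
      then show ?thesis by (simp only: power_mult_distrib)
    qed
    finally show "(Mat \<beta>0 (n*(k+1)) powr (1/n)) ^ n \<le> (D ^ (k+1) * Mat \<gamma> (k+1)) ^ n" .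
    show "0 \<le> D ^ (k+1) * Mat \<gamma> (k+1)" using g pos[OF g(1)] by (simp add: less_imp_le)
  qed
  have st2: "Mat \<gamma> (k+1) \<le> C1 ^ (k+1) * Mat \<gamma>1 k * Mat \<gamma>1 1" for k using mg1[of k 1] by simp
  have A0: "0 < D * C1 * Mat \<gamma>1 1" using g g1 pos[OF g1(1)] by simp
  have B0: "0 < D * C1" using g g1 by simp
  have main: "\<forall>k. Mat \<beta>0 (n*(k+1)) powr (1/n) \<le> D * C1 * Mat \<gamma>1 1 * (D * C1) ^ k * Mat \<gamma>1 k"
  proof
    fix k
    have "Mat \<beta>0 (n*(k+1)) powr (1/n) \<le> D ^ (k+1) * (C1 ^ (k+1) * Mat \<gamma>1 k * Mat \<gamma>1 1)"
      using st[of k] st2[of k] g by (meson mult_left_mono order_trans zero_le_power less_le_trans zero_less_one less_imp_le)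
    also have "\<dots> = D * C1 * Mat \<gamma>1 1 * (D * C1) ^ k * Mat \<gamma>1 k" by (simp add: power_mult_distrib mult_ac)
    finally show "Mat \<beta>0 (n*(k+1)) powr (1/n) \<le> D * C1 * Mat \<gamma>1 1 * (D * C1) ^ k * Mat \<gamma>1 k" .
  qed
  show ?thesis using g1(1) A0 B0 main by blast
qed


lemma series_package:
  fixes M N :: "nat \<Rightarrow> real" and s C K \<rho> :: real and c :: "nat \<Rightarrow> real"
  assumes ws: "weight_seq M" and nq: "nonquasianalytic M" and n1: "n \<ge> 1"
    and s1: "s \<ge> 1" and C0: "C > 0" and Npos: "\<And>k. N k > 0"
    and SV: "\<And>j i. j \<ge> 1 \<Longrightarrow> i < j \<Longrightarrow> N j * Tl M j ^ (j - i) \<le> s ^ j * M i * (C * real j) ^ (j - i)"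
    and K0: "K \<ge> 0" and r0: "\<rho> \<ge> 0" and rW: "\<rho> * (3 * exp 1 * (s * exp 1 * max 1 C)) \<le> 1 / 2"
    and cb: "\<And>j. \<bar>c j\<bar> \<le> K * \<rho> ^ j * N (n*j) powr (1/n)"
  shows "\<And>k x. ((\<lambda>x. \<Sum>j. c j * Gf M n j k x) has_real_derivative (\<Sum>j. c j * Gf M n j (Suc k) x)) (at x)"
    and "\<And>k x. \<bar>\<Sum>j. c j * Gf M n j k x\<bar> \<le> 2 * (K * (2 * max 1 (N 0 powr (1/n))) * 4 ^ k * M (n*(k+1)) powr (1/n))"
    and "\<And>k. (\<Sum>j. c j * Gf M n j k 0) = c k"
proof -
  define W where "W = 3 * exp 1 * (s * exp 1 * max 1 C)"
  define K0 where "K0 = 2 * max 1 (N 0 powr (1/n))"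
  define Bd where "Bd k j = K * K0 * 4 ^ k * M (n*(k+1)) powr (1/n) * (1/2) ^ j" for k j
  have W0: "W > 0" unfolding W_def using s1 by simp
  have bd: "\<bar>c j * Gf M n j k x\<bar> \<le> Bd k j" for j k x
  proof -
    define b where "b = N (n*j) powr (1/n)"
    have b0: "b > 0" unfolding b_def using Npos[of "n*j"] by simp
    have gb: "b * \<bar>Gf M n j k x\<bar> \<le> K0 * 4 ^ k * W ^ j * M (n*(k+1)) powr (1/n)"
      unfolding b_def K0_def W_def by (rule Gf_bound[OF ws nq n1 s1 C0 Npos SV])
    have "\<bar>c j * Gf M n j k x\<bar> = \<bar>c j\<bar> * \<bar>Gf M n j k x\<bar>" by (simp add: abs_mult)
    also have "\<dots> \<le> (K * \<rho> ^ j * b) * \<bar>Gf M n j k x\<bar>"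
      using cb[of j] unfolding b_def by (intro mult_right_mono) auto
    also have "\<dots> = (K * \<rho> ^ j) * (b * \<bar>Gf M n j k x\<bar>)" by (simp add: mult_ac)
    also have "\<dots> \<le> (K * \<rho> ^ j) * (K0 * 4 ^ k * W ^ j * M (n*(k+1)) powr (1/n))"
      using gb K0 r0 by (intro mult_left_mono) auto
    also have "\<dots> = K * K0 * 4 ^ k * M (n*(k+1)) powr (1/n) * (\<rho> * W) ^ j"
      by (simp add: power_mult_distrib mult_ac)
    also have "\<dots> \<le> Bd k j" unfolding Bd_def
    proof (rule mult_left_mono)
      show "(\<rho> * W) ^ j \<le> (1/2) ^ j" using rW r0 W0 unfolding W_def by (intro power_mono) auto
      show "0 \<le> K * K0 * 4 ^ k * M (n*(k+1)) powr (1/n)" using K0 unfolding K0_def by simp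
    qed
    finally show ?thesis .
  qed
  have sb: "summable (Bd k)" for k
    unfolding Bd_def by (rule summable_mult) (simp add: summable_geometric)
  have sumBd: "(\<Sum>j. Bd k j) = 2 * (K * K0 * 4 ^ k * M (n*(k+1)) powr (1/n))" for k
  proof -
    have "(\<Sum>j. Bd k j) = K * K0 * 4 ^ k * M (n*(k+1)) powr (1/n) * (\<Sum>j. (1/2::real) ^ j)"
      unfolding Bd_def by (rule suminf_mult) (simp add: summable_geometric)
    also have "(\<Sum>j. (1/2::real) ^ j) = 2" using suminf_geometric[of "1/2::real"] by simp
    finally show ?thesis by simp
  qed
  have dG: "\<And>j k x. (Gf M n j k has_real_derivative Gf M n j (Suc k) x) (at x)"
    by (rule Gf_deriv[OF ws nq n1])
  show "\<And>k x. ((\<lambda>x. \<Sum>j. c j * Gf M n j k x) has_real_derivative (\<Sum>j. c j * Gf M n j (Suc k) x)) (at x)"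
    by (rule series_deriv[where G="Gf M n" and c=c and Bd=Bd, OF dG bd sb])
  show "\<And>k x. \<bar>\<Sum>j. c j * Gf M n j k x\<bar> \<le> 2 * (K * (2 * max 1 (N 0 powr (1/n))) * 4 ^ k * M (n*(k+1)) powr (1/n))"
    using series_summable[where G="Gf M n" and c=c and Bd=Bd, OF bd sb] sumBd unfolding K0_def by metis
  show "\<And>k. (\<Sum>j. c j * Gf M n j k 0) = c k"
    by (rule series_at0) (rule Gf_at0[OF ws nq n1])
qed


lemma preceq_unpack:
  assumes "seq_preceq A B" "\<And>k. A k > 0" "\<And>k. B k > 0"
  shows "\<exists>c\<ge>1. \<forall>k\<ge>1. A k \<le> c ^ k * B k"
proof -
  obtain c0 where c0: "\<And>k. k \<ge> 1 \<Longrightarrow> (A k / B k) powr (1 / real k) \<le> c0"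
    using assms(1) unfolding seq_preceq_def by blast
  define c where "c = max 1 c0"
  have "A k \<le> c ^ k * B k" if k: "k \<ge> 1" for k
  proof -
    define x where "x = A k / B k"
    have x0: "x > 0" unfolding x_def using assms(2,3) by simp
    have "x = (x powr (1 / real k)) ^ k" by (rule powr_inv_pow[symmetric]) (use x0 k in auto)
    also have "\<dots> \<le> c ^ k" using c0[OF k] x0 unfolding x_def c_def by (intro power_mono) auto
    finally show ?thesis unfolding x_def using assms(3)[of k] by (simp add: divide_le_eq mult.commute)
  qed
  moreover have "c \<ge> 1" unfolding c_def by simp
  ultimately show ?thesis by blast
qed

lemma cmod_combo: "cmod (complex_of_real t * (complex_of_real u + \<i> * complex_of_real v)) \<le> \<bar>t\<bar> * (\<bar>u\<bar> + \<bar>v\<bar>)"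
proof -
  have "cmod (complex_of_real u + \<i> * complex_of_real v) \<le> cmod (complex_of_real u) + cmod (\<i> * complex_of_real v)"
    by (rule norm_triangle_ineq)
  also have "\<dots> = \<bar>u\<bar> + \<bar>v\<bar>" by (simp add: norm_mult)
  finally show ?thesis by (simp add: norm_mult mult_left_mono)
qed


theorem proposition5p3:
  fixes Mat Mat' :: "real \<Rightarrow> nat \<Rightarrow> real"
  assumes "weight_matrix Mat"
    and "nonquasianalytic_matrix Mat"
    and "R_moderate_growth Mat"
    and "\<And>\<alpha> k. \<alpha> > 0 \<Longrightarrow> Mat' \<alpha> k > 0"
    and "\<And>\<alpha>. \<alpha> > 0 \<Longrightarrow>
           liminf (\<lambda>k. ereal ((Mat' \<alpha> k / fact k) powr (1 / real k))) > 0"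
    and "\<exists>\<alpha>0>0. (\<forall>\<alpha>>0. \<exists>n::nat. n \<ge> 1 \<and> seq_preceq (Mat' \<alpha>) (seq_pow_index (Mat' \<alpha>0) n))
                 \<and> (\<exists>\<beta>0>0. SV_rel (Mat' \<alpha>0) (Mat \<beta>0))"
  shows "Lambda_family Mat' \<subseteq> jet_image (E_roumieu Mat)"
proof
  fix a assume "a \<in> Lambda_family Mat'"
  then obtain \<alpha> \<sigma> K where al: "\<alpha> > 0" and sig: "\<sigma> > 0" and aK: "\<And>k. cmod (a k) \<le> K * \<sigma> ^ k * Mat' \<alpha> k"
    unfolding Lambda_family_def Lambda_seq_def by auto
  obtain \<alpha>0 \<beta>0 where a0: "\<alpha>0 > 0" and hyp: "\<forall>\<alpha>>0. \<exists>n::nat. n \<ge> 1 \<and> seq_preceq (Mat' \<alpha>) (seq_pow_index (Mat' \<alpha>0) n)"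
    and b0: "\<beta>0 > 0" and sv: "SV_rel (Mat' \<alpha>0) (Mat \<beta>0)"
    using assms(6) by blast
  obtain n :: nat where n1: "n \<ge> 1" and pq: "seq_preceq (Mat' \<alpha>) (seq_pow_index (Mat' \<alpha>0) n)"
    using hyp al by blast
  define N where "N = Mat' \<alpha>0"
  define M where "M = Mat \<beta>0"
  define b where "b k = N (n*k) powr (1 / real n)" for k
  have Npos: "\<And>k. N k > 0" unfolding N_def using assms(4)[OF a0] by simp
  have b0p: "b k > 0" for k unfolding b_def using Npos[of "n*k"] by simp
  have bspi: "seq_pow_index (Mat' \<alpha>0) n = b" unfolding b_def N_def seq_pow_index_def by (simp add: fun_eq_iff)
  have Apos: "\<And>k. Mat' \<alpha> k > 0" using assms(4)[OF al] by simp
  obtain c1 where c1: "c1 \<ge> 1" and c1b: "\<And>k. k \<ge> 1 \<Longrightarrow> Mat' \<alpha> k \<le> c1 ^ k * b k"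
    using preceq_unpack[OF pq[unfolded bspi] Apos b0p] by blast
  have K0: "K \<ge> 0"
  proof -
    have "0 \<le> cmod (a 0)" by simp
    also have "\<dots> \<le> K * Mat' \<alpha> 0" using aK[of 0] by simp
    finally show ?thesis using Apos[of 0] by (simp add: zero_le_mult_iff)
  qed
  define K1 where "K1 = K * max 1 (Mat' \<alpha> 0 / b 0)"
  define \<sigma>1 where "\<sigma>1 = \<sigma> * c1"
  have K1p: "K1 \<ge> 0" unfolding K1_def using K0 by simp
  have s1p: "\<sigma>1 > 0" unfolding \<sigma>1_def using sig c1 by simp
  have ab: "cmod (a k) \<le> K1 * \<sigma>1 ^ k * b k" for k
  proof (cases "k = 0")
    case True
    have "cmod (a 0) \<le> K * Mat' \<alpha> 0" using aK[of 0] by simp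
    also have "\<dots> = K * (Mat' \<alpha> 0 / b 0) * b 0" using b0p[of 0] by simp
    also have "\<dots> \<le> K1 * b 0" unfolding K1_def using K0 b0p[of 0]
      by (intro mult_right_mono mult_left_mono) auto
    finally show ?thesis using True by simp
  next
    case False
    then have k1: "k \<ge> 1" by simp
    have "cmod (a k) \<le> K * \<sigma> ^ k * Mat' \<alpha> k" by (rule aK)
    also have "\<dots> \<le> K * \<sigma> ^ k * (c1 ^ k * b k)" using c1b[OF k1] K0 sig by (intro mult_left_mono) auto
    also have "\<dots> = K * \<sigma>1 ^ k * b k" unfolding \<sigma>1_def by (simp add: power_mult_distrib mult_ac)
    also have "\<dots> \<le> K1 * \<sigma>1 ^ k * b k" unfolding K1_def using K0 s1p b0p[of k]
      by (intro mult_right_mono) (auto intro: mult_left_le_one_le simp: mult_le_cancel_left1)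
    finally show ?thesis .
  qed
  have ws: "weight_seq M" unfolding M_def by (rule wm_ws[OF assms(1) b0])
  have nq: "nonquasianalytic M" using assms(2) b0 unfolding M_def nonquasianalytic_matrix_def by blast
  obtain s :: nat and C where s1: "s \<ge> 1" and C0: "C > 0"
    and SV: "\<And>j i. j \<ge> 1 \<Longrightarrow> i < j \<Longrightarrow> N j * Tl M j ^ (j - i) \<le> real s ^ j * M i * (C * real j) ^ (j - i)"
    using SV_unpack[OF sv[folded N_def M_def] ws nq Npos] by blast
  have s1r: "real s \<ge> 1" using s1 by simp
  define W where "W = 3 * exp 1 * (real s * exp 1 * max 1 C)"
  have W0: "W > 0" unfolding W_def using s1 by simp
  define \<tau> where "\<tau> = 2 * \<sigma>1 * W"
  have t0: "\<tau> > 0" unfolding \<tau>_def using s1p W0 by simp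
  define \<rho> where "\<rho> = \<sigma>1 / \<tau>"
  have r0: "\<rho> \<ge> 0" unfolding \<rho>_def using s1p t0 by simp
  have rW: "\<rho> * (3 * exp 1 * (real s * exp 1 * max 1 C)) \<le> 1 / 2"
    unfolding \<rho>_def \<tau>_def W_def[symmetric] using s1p W0 by simp
  define cr where "cr j = Re (a j) / \<tau> ^ j" for j
  define ci where "ci j = Im (a j) / \<tau> ^ j" for j
  have crb: "\<bar>cr j\<bar> \<le> K1 * \<rho> ^ j * N (n*j) powr (1/n)" for j
  proof -
    have "\<bar>cr j\<bar> \<le> cmod (a j) / \<tau> ^ j" unfolding cr_def using t0 abs_Re_le_cmod[of "a j"]
      by (simp add: abs_div divide_right_mono)
    also have "\<dots> \<le> K1 * \<sigma>1 ^ j * b j / \<tau> ^ j" using ab[of j] t0 by (simp add: divide_right_mono)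
    also have "\<dots> = K1 * \<rho> ^ j * N (n*j) powr (1/n)" unfolding \<rho>_def b_def by (simp add: power_divide)
    finally show ?thesis .
  qed
  have cib: "\<bar>ci j\<bar> \<le> K1 * \<rho> ^ j * N (n*j) powr (1/n)" for j
  proof -
    have "\<bar>ci j\<bar> \<le> cmod (a j) / \<tau> ^ j" unfolding ci_def using t0 abs_Im_le_cmod[of "a j"]
      by (simp add: abs_div divide_right_mono)
    also have "\<dots> \<le> K1 * \<sigma>1 ^ j * b j / \<tau> ^ j" using ab[of j] t0 by (simp add: divide_right_mono)
    also have "\<dots> = K1 * \<rho> ^ j * N (n*j) powr (1/n)" unfolding \<rho>_def b_def by (simp add: power_divide)
    finally show ?thesis .
  qed
  define Fr where "Fr k y = (\<Sum>j. cr j * Gf M n j k y)" for k y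
  define Fi where "Fi k y = (\<Sum>j. ci j * Gf M n j k y)" for k y
  note PR = series_package[OF ws nq n1 s1r C0 Npos SV K1p r0 rW crb]
  note PI = series_package[OF ws nq n1 s1r C0 Npos SV K1p r0 rW cib]
  have dR: "(Fr k has_real_derivative Fr (Suc k) y) (at y)" for k y unfolding Fr_def by (rule PR(1))
  have dI: "(Fi k has_real_derivative Fi (Suc k) y) (at y)" for k y unfolding Fi_def by (rule PI(1))
  define F where "F k x = complex_of_real (\<tau> ^ k) * (complex_of_real (Fr k (\<tau> * x)) + \<i> * complex_of_real (Fi k (\<tau> * x)))" for k x
  define f where "f = F 0"
  have dF: "(F k has_vector_derivative F (Suc k) x) (at x)" for k x
  proof -
    have r1: "((\<lambda>x. Fr k (\<tau> * x)) has_real_derivative Fr (Suc k) (\<tau> * x) * \<tau>) (at x)"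
      by (rule DERIV_chain2[OF dR DERIV_cmult_Id])
    have i1: "((\<lambda>x. Fi k (\<tau> * x)) has_real_derivative Fi (Suc k) (\<tau> * x) * \<tau>) (at x)"
      by (rule DERIV_chain2[OF dI DERIV_cmult_Id])
    have "(F k has_vector_derivative complex_of_real (\<tau> ^ k) * (complex_of_real (Fr (Suc k) (\<tau> * x) * \<tau>) + \<i> * complex_of_real (Fi (Suc k) (\<tau> * x) * \<tau>))) (at x)"
      unfolding F_def
      by (intro has_vector_derivative_mult_right has_vector_derivative_add has_vector_derivative_of_real r1 i1)
    moreover have "complex_of_real (\<tau> ^ k) * (complex_of_real (Fr (Suc k) (\<tau> * x) * \<tau>) + \<i> * complex_of_real (Fi (Suc k) (\<tau> * x) * \<tau>)) = F (Suc k) x"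
      unfolding F_def by (simp add: algebra_simps)
    ultimately show ?thesis by simp
  qed
  have der: "derivs_of f F" unfolding derivs_of_def f_def using dF by simp
  have jet: "F k 0 = a k" for k
  proof -
    have "Fr k 0 = cr k" unfolding Fr_def by (rule PR(3))
    moreover have "Fi k 0 = ci k" unfolding Fi_def by (rule PI(3))
    ultimately have "F k 0 = complex_of_real (\<tau> ^ k) * (complex_of_real (Re (a k) / \<tau> ^ k) + \<i> * complex_of_real (Im (a k) / \<tau> ^ k))"
      unfolding F_def cr_def ci_def by simp
    also have "\<dots> = complex_of_real (Re (a k)) + \<i> * complex_of_real (Im (a k))"
      using t0 by (simp add: field_simps)
    also have "\<dots> = a k" by (simp add: complex_eq[symmetric])
    finally show ?thesis .
  qed
  obtain \<gamma> A B where g0: "\<gamma> > 0" and A0: "A > 0" and B0: "B > 0"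
    and MnB: "\<And>k. Mat \<beta>0 (n*(k+1)) powr (1/n) \<le> A * B ^ k * Mat \<gamma> k"
    using Mn_bound[OF assms(1) assms(3) b0 n1] by blast
  define K0 where "K0 = 2 * max 1 (N 0 powr (1/n))"
  have K0p: "K0 > 0" unfolding K0_def by simp
  have Fb: "cmod (F k x) \<le> (4 * K1 * K0 * A) * (4 * \<tau> * B) ^ k * Mat \<gamma> k" for k x
  proof -
    define Mn where "Mn = M (n*(k+1)) powr (1/n)"
    have hr: "\<bar>Fr k (\<tau> * x)\<bar> \<le> 2 * (K1 * K0 * 4 ^ k * Mn)" unfolding Fr_def K0_def Mn_def by (rule PR(2))
    have hi: "\<bar>Fi k (\<tau> * x)\<bar> \<le> 2 * (K1 * K0 * 4 ^ k * Mn)" unfolding Fi_def K0_def Mn_def by (rule PI(2))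
    have "cmod (F k x) \<le> \<bar>\<tau> ^ k\<bar> * (\<bar>Fr k (\<tau> * x)\<bar> + \<bar>Fi k (\<tau> * x)\<bar>)" unfolding F_def by (rule cmod_combo)
    also have "\<dots> \<le> \<tau> ^ k * (4 * (K1 * K0 * 4 ^ k * Mn))" using hr hi t0 by (simp add: mult_left_mono)
    also have "\<dots> \<le> \<tau> ^ k * (4 * (K1 * K0 * 4 ^ k * (A * B ^ k * Mat \<gamma> k)))"
      using MnB[of k] t0 K1p K0p unfolding Mn_def M_def by (intro mult_left_mono) auto
    also have "\<dots> = (4 * K1 * K0 * A) * (4 * \<tau> * B) ^ k * Mat \<gamma> k" by (simp add: power_mult_distrib mult_ac)
    finally show ?thesis .
  qed
  have fE: "f \<in> E_roumieu Mat"
    unfolding E_roumieu_def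
  proof (intro CollectI exI[of _ F] conjI allI)
    show "derivs_of f F" by (rule der)
    fix n' :: nat
    show "\<exists>\<sigma>>0. \<exists>\<alpha>>0. \<exists>C. \<forall>x\<in>{- real n'..real n'}. \<forall>k. cmod (F k x) \<le> C * \<sigma> ^ k * Mat \<alpha> k"
    proof -
      have "4 * \<tau> * B > 0" using t0 B0 by simp
      then show ?thesis using g0 Fb by (metis mult.commute mult.left_commute)
    qed
  qed
  show "a \<in> jet_image (E_roumieu Mat)"
    unfolding jet_image_def using fE der jet by blast
qed

end
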